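(* Let $F_1,\dots,F_n:\mathbb{R}^d\to\mathbb{R}^d$, $F=\frac1n\sum_iF_i$, and let $x^*$ satisfy $F(x^* )=0$. Assume $F$ is $L$-Lipschitz and satisfies the weak Minty condition with parameter $0<\rho<\frac1{2L}$, and that the Expected Residual condition holds with parameter $\delta>0$ for $g=F_v$, $v\sim\mathcal D$; let $\sigma_*^2=\mathbb{E}\|F_v(x^* )\|^2<\infty$. Let $\gamma_k=\gamma$, $\omega_k=\omega$ with $$\max\Big\{2\rho,\frac1{2L}\Big\}<\gamma<\frac1L,\qquad 0<\omega<\min\Big\{\gamma-2\rho,\frac1{4L}-\frac\gamma4\Big\}.$$ Then for all $K\ge2$, the iterates of mini-batched SPEG with batch-size $$\tau\ge\max\Big\{1,\frac{32\delta}{(1-L\gamma)L^3\omega},\frac{48\omega\gamma\delta(K-1)}{(1-L\gamma)^2},\frac{2\omega\gamma\sigma_*^2(K-1)}{(1-L\gamma)\|x_0-x^*\|^2}\Big\}$$ satisfy $$\min_{0\le k\le K-1}\mathbb{E}\big[\|F(\hat x_k)\|^2\big]\le\frac{C\|x_0-x^*\|^2}{K-1},\qquad C=\frac{48}{\omega\gamma(1-L(\gamma+4\omega))}.$$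
   Context: $L$-Lipschitz: $\|F(x)-F(y)\|\le L\|x-y\|$. Weak Minty condition with parameter $\rho>0$: $\langle F(x),x-x^*\rangle\ge-\rho\|F(x)\|^2$ for all $x\in\mathbb{R}^d$. A sampling distribution $\mathcal D$ is a distribution of a random $v\in\mathbb{R}^n_+$ with $\mathbb{E}[v_i]=1$ for all $i$; $F_v(x):=\frac1n\sum_iv_iF_i(x)$. Expected Residual with parameter $\delta$: $\mathbb{E}\|(F_v(x)-F_v(x^* ))-(F(x)-F(x^* ))\|^2\le\frac\delta2\|x-x^*\|^2$ for all $x$. Mini-batched SPEG with batch-size $\tau$: given $x_0$, $\hat x_{-1}=x_0$, and for $k\ge0$: $\hat x_k=x_k-\gamma_k G_{k-1}(\hat x_{k-1})$, $x_{k+1}=x_k-\omega_kG_k(\hat x_k)$, where $G_k(y)=\frac1\tau\sum_{j=1}^\tau F_{v_{k,j}}(y)$ and all $v_{k,j}$ are i.i.d. samples from $\mathcal D$ (independent across $j$ and $k$). *)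

theory Defs
  imports "HOL-Probability.Probability"
begin

text \<open>Operators F_1..F_n are indexed by a finite type 'n; R^d is real^'d;
  a sampling vector v is an element of real^'n.\<close>

definition Fv :: "('n::finite \<Rightarrow> real^'d \<Rightarrow> real^'d) \<Rightarrow> real^'n \<Rightarrow> real^'d \<Rightarrow> real^'d" where
  "Fv Fs v y = (1 / real CARD('n)) *\<^sub>R (\<Sum>i\<in>UNIV. (v $ i) *\<^sub>R Fs i y)"

definition Fbar :: "('n::finite \<Rightarrow> real^'d \<Rightarrow> real^'d) \<Rightarrow> real^'d \<Rightarrow> real^'d" where
  "Fbar Fs y = (1 / real CARD('n)) *\<^sub>R (\<Sum>i\<in>UNIV. Fs i y)"

text \<open>Mini-batch estimator built from sample block m: samples s (m,j), j < tau.
  Block m = 0 plays the role of the paper's index k = -1, block m = k+1 of index k.\<close>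

definition minibatch :: "('n::finite \<Rightarrow> real^'d \<Rightarrow> real^'d) \<Rightarrow> nat \<Rightarrow> (nat \<times> nat \<Rightarrow> real^'n)
    \<Rightarrow> nat \<Rightarrow> real^'d \<Rightarrow> real^'d" where
  "minibatch Fs tau s m y = (1 / real tau) *\<^sub>R (\<Sum>j<tau. Fv Fs (s (m, j)) y)"

text \<open>speg ... k = (x_k, xhat_k) for mini-batched SPEG with constant step sizes.\<close>

fun speg :: "('n::finite \<Rightarrow> real^'d \<Rightarrow> real^'d) \<Rightarrow> nat \<Rightarrow> real \<Rightarrow> real \<Rightarrow> real^'d
    \<Rightarrow> (nat \<times> nat \<Rightarrow> real^'n) \<Rightarrow> nat \<Rightarrow> (real^'d) \<times> (real^'d)" where
  "speg Fs tau gam om x0 s 0 = (x0, x0 - gam *\<^sub>R minibatch Fs tau s 0 x0)"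
| "speg Fs tau gam om x0 s (Suc k) =
     (let (x, xh) = speg Fs tau gam om x0 s k;
          g = minibatch Fs tau s (Suc k) xh;
          x' = x - om *\<^sub>R g
      in (x', x' - gam *\<^sub>R g))"

end

theory Submission
  imports Defs
begin

lemma young_real:
  fixes a b \<theta> :: real
  assumes "0 < \<theta>" "\<theta> < 1"
  shows "(a + b)^2 \<le> a^2 / \<theta> + b^2 / (1 - \<theta>)"
proof -
  have "0 \<le> (a * (1 - \<theta>) - b * \<theta>)^2" by simp
  hence "(a + b)^2 * (\<theta> * (1 - \<theta>)) \<le> a^2 * (1-\<theta>) + b^2 * \<theta>"
    by (simp add: power2_eq_square algebra_simps)
  thus ?thesis using assms by (simp add: field_simps)
qed

lemma young_norm:
  fixes x y :: "'a::real_normed_vector"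
  assumes "0 < \<theta>" "\<theta> < 1"
  shows "(norm (x + y))^2 \<le> (norm x)^2 / \<theta> + (norm y)^2 / (1 - \<theta>)"
proof -
  have "(norm (x + y))^2 \<le> (norm x + norm y)^2"
    by (simp add: norm_triangle_ineq power_mono)
  also have "\<dots> \<le> (norm x)^2 / \<theta> + (norm y)^2 / (1 - \<theta>)" by (rule young_real[OF assms])
  finally show ?thesis .
qed

lemma mean_zero_sq:
  fixes e :: "'b \<Rightarrow> 'a::euclidean_space"
  assumes M: "prob_space M" and e: "e \<in> borel_measurable M" and VE0: "0 \<le> VE"
    and VE: "(\<integral>\<^sup>+w. ennreal ((norm (e w))^2) \<partial>M) = ennreal VE"
    and mz: "\<And>c. integrable M (\<lambda>w. inner c (e w)) \<and> (\<integral>w. inner c (e w) \<partial>M) = 0"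
  shows "(\<integral>\<^sup>+w. ennreal ((norm (c + k *\<^sub>R e w))^2) \<partial>M) = ennreal ((norm c)^2 + k^2 * VE)"
proof -
  interpret prob_space M by fact
  have int2: "integrable M (\<lambda>w. (norm (e w))^2)"
    by (rule integrableI_nn_integral_finite[OF _ _ VE]) (use e in auto)
  have intval: "(\<integral>w. (norm (e w))^2 \<partial>M) = VE"
    by (rule integral_eq_nn_integral[THEN trans]) (use int2 VE VE0 in auto)
  have eq: "\<And>w. (norm (c + k *\<^sub>R e w))^2 = (norm c)^2 + 2 * k * inner c (e w) + k^2 * (norm (e w))^2"
    unfolding power2_norm_eq_inner by (simp add: inner_add_left inner_add_right inner_commute power2_eq_square algebra_simps)
  have intf: "integrable M (\<lambda>w. (norm c)^2 + 2 * k * inner c (e w) + k^2 * (norm (e w))^2)"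
    using mz[of c] int2 by auto
  have "(\<integral>\<^sup>+w. ennreal ((norm (c + k *\<^sub>R e w))^2) \<partial>M)
      = ennreal (\<integral>w. (norm c)^2 + 2 * k * inner c (e w) + k^2 * (norm (e w))^2 \<partial>M)"
    unfolding eq by (rule nn_integral_eq_integral[OF intf]) (simp add: eq[symmetric])
  also have "(\<integral>w. (norm c)^2 + 2 * k * inner c (e w) + k^2 * (norm (e w))^2 \<partial>M) = (norm c)^2 + k^2 * VE"
    using mz[of c] int2 intval by (simp add: prob_space)
  finally show ?thesis .
qed

locale spegloc =
  fixes Fs :: "'n::finite \<Rightarrow> real^'d \<Rightarrow> real^'d" and xstar :: "real^'d"
    and D :: "(real^'n) measure" and \<delta> :: real
  assumes meas: "\<forall>i. Fs i \<in> borel_measurable borel"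
    and root: "Fbar Fs xstar = 0"
    and D_prob: "prob_space D" and D_sets: "sets D = sets borel"
    and D_mean: "\<forall>i. integrable D (\<lambda>v. v $ i) \<and> (\<integral>v. v $ i \<partial>D) = 1"
    and ER: "\<forall>x. (\<integral>\<^sup>+v. ennreal ((norm ((Fv Fs v x - Fv Fs v xstar) - (Fbar Fs x - Fbar Fs xstar)))\<^sup>2) \<partial>D)
                 \<le> ennreal (\<delta> / 2 * (norm (x - xstar))\<^sup>2)"
    and sigma_fin: "integrable D (\<lambda>v. (norm (Fv Fs v xstar))\<^sup>2)"
    and delta_pos: "0 < \<delta>"
begin

lemma delta_nonneg: "0 \<le> \<delta>" using delta_pos by simp

definition "\<sigma>2 = (\<integral>v. (norm (Fv Fs v xstar))\<^sup>2 \<partial>D)"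

lemma sigma2_nonneg: "0 \<le> \<sigma>2"
  unfolding \<sigma>2_def by simp

lemma Fv_minus: "Fv Fs v y - Fbar Fs y = (1 / real CARD('n)) *\<^sub>R (\<Sum>i\<in>UNIV. (v $ i - 1) *\<^sub>R Fs i y)"
  unfolding Fv_def Fbar_def
  by (simp add: scaleR_diff_right[symmetric] sum_subtractf[symmetric] scaleR_left_diff_distrib)

lemma meas_Fv_gen:
  assumes f: "f \<in> borel_measurable M" and h: "h \<in> borel_measurable M"
  shows "(\<lambda>w. Fv Fs (f w) (h w)) \<in> borel_measurable M"
proof -
  have c: "\<And>i. (\<lambda>w. f w $ i) \<in> borel_measurable M"
  proof -
    fix i
    have "(\<lambda>v::real^'n. v $ i) \<in> borel_measurable borel"
      by (intro borel_measurable_continuous_onI continuous_intros)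
    from measurable_comp[OF f this] show "(\<lambda>w. f w $ i) \<in> borel_measurable M" by (simp add: comp_def)
  qed
  have g: "\<And>i. (\<lambda>w. Fs i (h w)) \<in> borel_measurable M"
    using measurable_comp[OF h meas[rule_format]] by (simp add: comp_def)
  show ?thesis unfolding Fv_def
    by (intro borel_measurable_scaleR borel_measurable_sum borel_measurable_const c g)
qed

lemma meas_Fv_D: "(\<lambda>v. Fv Fs v y) \<in> borel_measurable D"
  by (rule meas_Fv_gen) (auto simp: measurable_cong_sets[OF D_sets refl])

lemma mean_zero_D:
  "integrable D (\<lambda>v. inner c (Fv Fs v y - Fbar Fs y)) \<and> (\<integral>v. inner c (Fv Fs v y - Fbar Fs y) \<partial>D) = 0"
proof -
  interpret prob_space D by (rule D_prob)
  have eq: "\<And>v. inner c (Fv Fs v y - Fbar Fs y) = (1 / real CARD('n)) * (\<Sum>i\<in>UNIV. (v $ i - 1) * inner c (Fs i y))"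
    unfolding Fv_minus by (simp add: inner_sum_right)
  have int: "\<And>i. integrable D (\<lambda>v. (v $ i - 1) * inner c (Fs i y))"
    using D_mean by auto
  have ints: "integrable D (\<lambda>v. (\<Sum>i\<in>UNIV. (v $ i - 1) * inner c (Fs i y)))"
    using int by auto
  have "(\<integral>v. (\<Sum>i\<in>UNIV. (v $ i - 1) * inner c (Fs i y)) \<partial>D) = (\<Sum>i\<in>UNIV. (\<integral>v. (v $ i - 1) * inner c (Fs i y) \<partial>D))"
    using int by simp
  also have "\<dots> = 0"
    using D_mean by (simp add: prob_space)
  finally show ?thesis unfolding eq using ints by simp
qed

lemma second_moment_D:
  "(\<integral>\<^sup>+v. ennreal ((norm (Fv Fs v y - Fbar Fs y))\<^sup>2) \<partial>D) \<le> ennreal (\<delta> * (norm (y - xstar))\<^sup>2 + 2 * \<sigma>2)"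
proof -
  let ?a = "\<lambda>v. (Fv Fs v y - Fv Fs v xstar) - (Fbar Fs y - Fbar Fs xstar)"
  have pt: "\<And>v. (norm (Fv Fs v y - Fbar Fs y))\<^sup>2 \<le> 2 * (norm (?a v))\<^sup>2 + 2 * (norm (Fv Fs v xstar))\<^sup>2"
  proof -
    fix v
    have "Fv Fs v y - Fbar Fs y = ?a v + Fv Fs v xstar" using root by simp
    hence "(norm (Fv Fs v y - Fbar Fs y))\<^sup>2 = (norm (?a v + Fv Fs v xstar))\<^sup>2" by simp
    also have "\<dots> \<le> (norm (?a v))\<^sup>2 / (1/2) + (norm (Fv Fs v xstar))\<^sup>2 / (1 - 1/2)"
      by (rule young_norm) auto
    finally show "?thesis v" by simp
  qed
  have ma: "(\<lambda>v. ennreal ((norm (?a v))\<^sup>2)) \<in> borel_measurable D"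
    using meas_Fv_D by measurable
  have mb: "(\<lambda>v. ennreal ((norm (Fv Fs v xstar))\<^sup>2)) \<in> borel_measurable D"
    using meas_Fv_D by measurable
  have "(\<integral>\<^sup>+v. ennreal ((norm (Fv Fs v y - Fbar Fs y))\<^sup>2) \<partial>D)
       \<le> (\<integral>\<^sup>+v. 2 * ennreal ((norm (?a v))\<^sup>2) + 2 * ennreal ((norm (Fv Fs v xstar))\<^sup>2) \<partial>D)"
  proof (rule nn_integral_mono)
    fix v
    have "ennreal ((norm (Fv Fs v y - Fbar Fs y))\<^sup>2) \<le> ennreal (2 * (norm (?a v))\<^sup>2 + 2 * (norm (Fv Fs v xstar))\<^sup>2)"
      using pt by (rule ennreal_leI)
    also have "\<dots> = 2 * ennreal ((norm (?a v))\<^sup>2) + 2 * ennreal ((norm (Fv Fs v xstar))\<^sup>2)"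
      by (simp add: ennreal_plus ennreal_mult)
    finally show "ennreal ((norm (Fv Fs v y - Fbar Fs y))\<^sup>2) \<le> 2 * ennreal ((norm (?a v))\<^sup>2) + 2 * ennreal ((norm (Fv Fs v xstar))\<^sup>2)" .
  qed
  also have "\<dots> = 2 * (\<integral>\<^sup>+v. ennreal ((norm (?a v))\<^sup>2) \<partial>D) + 2 * (\<integral>\<^sup>+v. ennreal ((norm (Fv Fs v xstar))\<^sup>2) \<partial>D)"
    using ma mb by (simp add: nn_integral_add nn_integral_cmult)
  also have "(\<integral>\<^sup>+v. ennreal ((norm (Fv Fs v xstar))\<^sup>2) \<partial>D) = ennreal \<sigma>2"
    unfolding \<sigma>2_def by (rule nn_integral_eq_integral[OF sigma_fin]) auto
  also have "2 * (\<integral>\<^sup>+v. ennreal ((norm (?a v))\<^sup>2) \<partial>D) \<le> 2 * ennreal (\<delta> / 2 * (norm (y - xstar))\<^sup>2)"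
    using ER by (intro mult_left_mono) auto
  also have "2 * ennreal (\<delta> / 2 * (norm (y - xstar))\<^sup>2) + 2 * ennreal \<sigma>2 = ennreal (\<delta> * (norm (y - xstar))\<^sup>2 + 2 * \<sigma>2)"
  proof -
    have "\<And>x::real. 0 \<le> x \<Longrightarrow> 2 * ennreal x = ennreal (2 * x)"
      by (simp add: ennreal_mult)
    hence "2 * ennreal (\<delta> / 2 * (norm (y - xstar))\<^sup>2) + 2 * ennreal \<sigma>2
       = ennreal (2 * (\<delta> / 2 * (norm (y - xstar))\<^sup>2)) + ennreal (2 * \<sigma>2)"
      using sigma2_nonneg delta_nonneg by simp
    also have "\<dots> = ennreal (\<delta> * (norm (y - xstar))\<^sup>2 + 2 * \<sigma>2)"
      using sigma2_nonneg delta_nonneg by (simp add: ennreal_plus)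
    finally show ?thesis .
  qed
  finally show ?thesis by simp
qed

end

context spegloc begin

abbreviation "X y v \<equiv> Fv Fs v y - Fbar Fs y"

definition "VX y = enn2real (\<integral>\<^sup>+v. ennreal ((norm (X y v))\<^sup>2) \<partial>D)"

lemma VX_nn: "(\<integral>\<^sup>+v. ennreal ((norm (X y v))\<^sup>2) \<partial>D) = ennreal (VX y)"
proof -
  have "(\<integral>\<^sup>+v. ennreal ((norm (X y v))\<^sup>2) \<partial>D) < \<top>"
    using second_moment_D[of y] by (auto simp: top_unique less_top[symmetric] dest: order.strict_trans1)
  thus ?thesis unfolding VX_def by (simp add: less_top ennreal_enn2real)
qed

lemma VX_nonneg: "0 \<le> VX y" unfolding VX_def by simp

lemma VX_le: "VX y \<le> \<delta> * (norm (y - xstar))\<^sup>2 + 2 * \<sigma>2"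
  using second_moment_D[of y] unfolding VX_nn
  using delta_nonneg sigma2_nonneg by (subst (asm) ennreal_le_iff) auto

lemma meas_X: "X y \<in> borel_measurable D"
  using meas_Fv_D by measurable

lemma meas_X': "X y \<in> D \<rightarrow>\<^sub>M borel"
  using meas_X by simp

lemma batch_sum:
  assumes J: "finite J"
  shows "(\<integral>\<^sup>+w. ennreal ((norm (c + k *\<^sub>R (\<Sum>i\<in>J. X y (w i))))\<^sup>2) \<partial>(PiM J (\<lambda>_. D)))
          = ennreal ((norm c)\<^sup>2 + k\<^sup>2 * real (card J) * VX y)"
  using J
proof (induction J arbitrary: c rule: finite_induct)
  case empty
  interpret P: prob_space "PiM {} (\<lambda>_. D)" by (rule prob_space_PiM) (use D_prob in auto)
  show ?case by (simp add: P.emeasure_space_1)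
next
  case (insert i J)
  interpret Dp: prob_space D by (rule D_prob)
  interpret pp: product_prob_space "\<lambda>_. D" UNIV by unfold_locales
  interpret P: prob_space "PiM J (\<lambda>_. D)" by (rule prob_space_PiM) (use D_prob in auto)
  have mS: "\<And>K I. K \<subseteq> I \<Longrightarrow> (\<lambda>w. \<Sum>i\<in>K. X y (w i)) \<in> borel_measurable (PiM I (\<lambda>_. D))"
  proof -
    fix K I assume KI: "K \<subseteq> I"
    have "\<And>j. j \<in> K \<Longrightarrow> (\<lambda>w. X y (w j)) \<in> borel_measurable (PiM I (\<lambda>_. D))"
    proof -
      fix j assume "j \<in> K" hence "j \<in> I" using KI by auto
      from measurable_comp[OF measurable_component_singleton[of j I "\<lambda>_. D", OF this] meas_X']
      show "(\<lambda>w. X y (w j)) \<in> borel_measurable (PiM I (\<lambda>_. D))" by (simp add: comp_def)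
    qed
    thus "(\<lambda>w. \<Sum>i\<in>K. X y (w i)) \<in> borel_measurable (PiM I (\<lambda>_. D))" by (rule borel_measurable_sum)
  qed
  have mf: "(\<lambda>w. ennreal ((norm (c + k *\<^sub>R (\<Sum>i\<in>insert i J. X y (w i))))\<^sup>2)) \<in> borel_measurable (PiM (insert i J) (\<lambda>_. D))"
    using mS[of "insert i J" "insert i J"] by measurable
  have "(\<integral>\<^sup>+w. ennreal ((norm (c + k *\<^sub>R (\<Sum>i\<in>insert i J. X y (w i))))\<^sup>2) \<partial>(PiM (insert i J) (\<lambda>_. D)))
     = (\<integral>\<^sup>+x. (\<integral>\<^sup>+v. ennreal ((norm (c + k *\<^sub>R (\<Sum>j\<in>insert i J. X y ((x(i:=v)) j))))\<^sup>2) \<partial>D) \<partial>(PiM J (\<lambda>_. D)))"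
    by (rule pp.product_nn_integral_insert[OF insert(1,2) mf])
  also have "\<dots> = (\<integral>\<^sup>+x. ennreal ((norm (c + k *\<^sub>R (\<Sum>j\<in>J. X y (x j))))\<^sup>2 + k\<^sup>2 * VX y) \<partial>(PiM J (\<lambda>_. D)))"
  proof (rule nn_integral_cong)
    fix x
    have eq: "\<And>v. c + k *\<^sub>R (\<Sum>j\<in>insert i J. X y ((x(i:=v)) j)) = (c + k *\<^sub>R (\<Sum>j\<in>J. X y (x j))) + k *\<^sub>R X y v"
    proof -
      fix v
      have "(\<Sum>j\<in>J. X y ((x(i:=v)) j)) = (\<Sum>j\<in>J. X y (x j))"
        using insert(2) by (intro sum.cong) auto
      thus "?thesis v" using insert(1,2) by (simp add: scaleR_add_right algebra_simps)
    qed
    show "(\<integral>\<^sup>+v. ennreal ((norm (c + k *\<^sub>R (\<Sum>j\<in>insert i J. X y ((x(i:=v)) j))))\<^sup>2) \<partial>D)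
        = ennreal ((norm (c + k *\<^sub>R (\<Sum>j\<in>J. X y (x j))))\<^sup>2 + k\<^sup>2 * VX y)"
      unfolding eq
      by (rule mean_zero_sq[OF D_prob meas_X VX_nonneg VX_nn]) (rule mean_zero_D)
  qed
  also have "\<dots> = (\<integral>\<^sup>+x. ennreal ((norm (c + k *\<^sub>R (\<Sum>j\<in>J. X y (x j))))\<^sup>2) \<partial>(PiM J (\<lambda>_. D))) + ennreal (k\<^sup>2 * VX y)"
  proof -
    have m2: "(\<lambda>x. ennreal ((norm (c + k *\<^sub>R (\<Sum>j\<in>J. X y (x j))))\<^sup>2)) \<in> borel_measurable (PiM J (\<lambda>_. D))"
      using mS[of J J] by measurable
    have "(\<integral>\<^sup>+x. ennreal ((norm (c + k *\<^sub>R (\<Sum>j\<in>J. X y (x j))))\<^sup>2 + k\<^sup>2 * VX y) \<partial>(PiM J (\<lambda>_. D)))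
       = (\<integral>\<^sup>+x. ennreal ((norm (c + k *\<^sub>R (\<Sum>j\<in>J. X y (x j))))\<^sup>2) + ennreal (k\<^sup>2 * VX y) \<partial>(PiM J (\<lambda>_. D)))"
      using VX_nonneg by (intro nn_integral_cong) (simp add: ennreal_plus)
    also have "\<dots> = (\<integral>\<^sup>+x. ennreal ((norm (c + k *\<^sub>R (\<Sum>j\<in>J. X y (x j))))\<^sup>2) \<partial>(PiM J (\<lambda>_. D))) + ennreal (k\<^sup>2 * VX y)"
      using m2 by (subst nn_integral_add) (auto simp: P.emeasure_space_1)
    finally show ?thesis .
  qed
  also have "\<dots> = ennreal ((norm c)\<^sup>2 + k\<^sup>2 * real (card (insert i J)) * VX y)"
    unfolding insert(3) using insert(1,2) VX_nonneg
    by (simp add: ennreal_plus[symmetric] algebra_simps del: ennreal_plus)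
  finally show ?case .
qed

lemma minibatch_minus:
  assumes "0 < \<tau>"
  shows "minibatch Fs \<tau> w m y - Fbar Fs y = (1 / real \<tau>) *\<^sub>R (\<Sum>i\<in>Pair m ` {..<\<tau>}. X y (w i))"
proof -
  have "(\<Sum>i\<in>Pair m ` {..<\<tau>}. X y (w i)) = (\<Sum>j<\<tau>. X y (w (m, j)))"
    by (subst sum.reindex) (auto simp: inj_on_def)
  also have "\<dots> = (\<Sum>j<\<tau>. Fv Fs (w (m, j)) y) - real \<tau> *\<^sub>R Fbar Fs y"
    by (simp only: sum_subtractf sum_constant_scaleR card_lessThan)
  finally show ?thesis using assms unfolding minibatch_def
    by (simp add: scaleR_diff_right)
qed

lemma block:
  assumes "0 < \<tau>"
  shows "(\<integral>\<^sup>+w. ennreal ((norm (c + k *\<^sub>R (minibatch Fs \<tau> w m y - Fbar Fs y)))\<^sup>2) \<partial>(PiM (Pair m ` {..<\<tau>}) (\<lambda>_. D)))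
     = ennreal ((norm c)\<^sup>2 + k\<^sup>2 * (VX y / real \<tau>))"
proof -
  have "\<And>w. c + k *\<^sub>R (minibatch Fs \<tau> w m y - Fbar Fs y) = c + (k / real \<tau>) *\<^sub>R (\<Sum>i\<in>Pair m ` {..<\<tau>}. X y (w i))"
    unfolding minibatch_minus[OF assms] by simp
  hence "(\<integral>\<^sup>+w. ennreal ((norm (c + k *\<^sub>R (minibatch Fs \<tau> w m y - Fbar Fs y)))\<^sup>2) \<partial>(PiM (Pair m ` {..<\<tau>}) (\<lambda>_. D)))
     = ennreal ((norm c)\<^sup>2 + (k / real \<tau>)\<^sup>2 * real (card (Pair m ` {..<\<tau>})) * VX y)"
    by (simp add: batch_sum)
  also have "card (Pair m ` {..<\<tau>}) = \<tau>" by (subst card_image) (auto simp: inj_on_def)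
  finally show ?thesis using assms by (simp add: power2_eq_square)
qed

end

definition nextst :: "real \<Rightarrow> real \<Rightarrow> (real^'d) \<times> (real^'d) \<Rightarrow> real^'d \<Rightarrow> (real^'d) \<times> (real^'d)" where
  "nextst gam om st g = (fst st - om *\<^sub>R g, fst st - om *\<^sub>R g - gam *\<^sub>R g)"

lemma speg_Suc': "speg Fs tau gam om x0 s (Suc k) =
   nextst gam om (speg Fs tau gam om x0 s k) (minibatch Fs tau s (Suc k) (snd (speg Fs tau gam om x0 s k)))"
  by (simp add: nextst_def Let_def split: prod.split)

definition Jk :: "nat \<Rightarrow> nat \<Rightarrow> (nat \<times> nat) set" where
  "Jk tau k = {..k} \<times> {..<tau}"

lemma Jk_finite: "finite (Jk tau k)" unfolding Jk_def by auto

lemma Jk_Suc: "Jk tau (Suc k) = Jk tau k \<union> Pair (Suc k) ` {..<tau}"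
  unfolding Jk_def by auto

lemma Jk_0: "Jk tau 0 = Pair 0 ` {..<tau}"
  unfolding Jk_def by auto

lemma Jk_disj: "Jk tau k \<inter> Pair (Suc k) ` {..<tau} = {}"
  unfolding Jk_def by auto

lemma minibatch_dep:
  "(\<And>j. j < tau \<Longrightarrow> s (m, j) = s' (m, j)) \<Longrightarrow> minibatch Fs tau s m y = minibatch Fs tau s' m y"
  unfolding minibatch_def by (auto intro!: sum.cong arg_cong[where f="\<lambda>z. _ *\<^sub>R z"])

lemma speg_dep:
  "(\<And>i. i \<in> Jk tau k \<Longrightarrow> s i = s' i) \<Longrightarrow> speg Fs tau gam om x0 s k = speg Fs tau gam om x0 s' k"
proof (induction k)
  case 0
  have "minibatch Fs tau s 0 x0 = minibatch Fs tau s' 0 x0" using 0 by (intro minibatch_dep) (auto simp: Jk_def)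
  then show ?case by simp
next
  case (Suc k)
  have "speg Fs tau gam om x0 s k = speg Fs tau gam om x0 s' k"
    using Suc by (auto simp: Jk_def)
  moreover have "\<And>y. minibatch Fs tau s (Suc k) y = minibatch Fs tau s' (Suc k) y"
    using Suc.prems by (intro minibatch_dep) (auto simp: Jk_def)
  ultimately show ?case by (simp add: speg_Suc')
qed

context spegloc begin

lemma meas_comp_D:
  assumes "i \<in> I"
  shows "(\<lambda>s. s i) \<in> borel_measurable (PiM I (\<lambda>_. D)) \<or> True"
  by simp

lemma meas_minibatch:
  assumes QI: "Pair m ` {..<tau} \<subseteq> I" and h: "h \<in> borel_measurable (PiM I (\<lambda>_. D))"
  shows "(\<lambda>s. minibatch Fs tau s m (h s)) \<in> borel_measurable (PiM I (\<lambda>_. D))"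
proof -
  have "\<And>j. j < tau \<Longrightarrow> (\<lambda>s. Fv Fs (s (m, j)) (h s)) \<in> borel_measurable (PiM I (\<lambda>_. D))"
  proof -
    fix j assume "j < tau" hence ji: "(m, j) \<in> I" using QI by auto
    have "(\<lambda>s. s (m, j)) \<in> PiM I (\<lambda>_. D) \<rightarrow>\<^sub>M D"
      by (rule measurable_component_singleton[OF ji])
    hence "(\<lambda>s. s (m, j)) \<in> borel_measurable (PiM I (\<lambda>_. D))"
      by (simp add: measurable_cong_sets[OF refl D_sets])
    thus "(\<lambda>s. Fv Fs (s (m, j)) (h s)) \<in> borel_measurable (PiM I (\<lambda>_. D))"
      by (rule meas_Fv_gen[OF _ h])
  qed
  thus ?thesis unfolding minibatch_def
    by (intro borel_measurable_scaleR borel_measurable_const borel_measurable_sum) auto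
qed

lemma meas_speg:
  assumes "Jk tau k \<subseteq> I"
  shows "(\<lambda>s. fst (speg Fs tau gam om x0 s k)) \<in> borel_measurable (PiM I (\<lambda>_. D))
       \<and> (\<lambda>s. snd (speg Fs tau gam om x0 s k)) \<in> borel_measurable (PiM I (\<lambda>_. D))"
  using assms
proof (induction k)
  case 0
  have Q: "Pair 0 ` {..<tau} \<subseteq> I" using 0 by (simp add: Jk_0)
  have "(\<lambda>s. minibatch Fs tau s 0 x0) \<in> borel_measurable (PiM I (\<lambda>_. D))"
    using meas_minibatch[OF Q, of "\<lambda>_. x0"] by simp
  then show ?case by simp
next
  case (Suc k)
  have IH: "(\<lambda>s. fst (speg Fs tau gam om x0 s k)) \<in> borel_measurable (PiM I (\<lambda>_. D))"
       "(\<lambda>s. snd (speg Fs tau gam om x0 s k)) \<in> borel_measurable (PiM I (\<lambda>_. D))"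
    using Suc by (auto simp: Jk_Suc)
  have Q: "Pair (Suc k) ` {..<tau} \<subseteq> I" using Suc.prems by (simp add: Jk_Suc)
  have mb: "(\<lambda>s. minibatch Fs tau s (Suc k) (snd (speg Fs tau gam om x0 s k))) \<in> borel_measurable (PiM I (\<lambda>_. D))"
    by (rule meas_minibatch[OF Q IH(2)])
  show ?case unfolding speg_Suc' nextst_def using IH mb by simp
qed

lemma meas_speg_pair:
  assumes "Jk tau k \<subseteq> I"
  shows "(\<lambda>s. speg Fs tau gam om x0 s k) \<in> borel_measurable (PiM I (\<lambda>_. D))"
proof -
  have "(\<lambda>s. (fst (speg Fs tau gam om x0 s k), snd (speg Fs tau gam om x0 s k))) \<in> PiM I (\<lambda>_. D) \<rightarrow>\<^sub>M borel \<Otimes>\<^sub>M borel"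
    using meas_speg[OF assms] by (intro measurable_Pair) auto
  thus ?thesis by (simp add: borel_prod)
qed

abbreviation "Om \<equiv> PiM (UNIV :: (nat \<times> nat) set) (\<lambda>_. D)"

lemma restr:
  assumes J: "finite J" and f: "f \<in> borel_measurable (PiM J (\<lambda>_. D))"
  shows "(\<integral>\<^sup>+s. f (restrict s J) \<partial>Om) = (\<integral>\<^sup>+x. f x \<partial>(PiM J (\<lambda>_. D)))"
proof -
  interpret Dp: prob_space D by (rule D_prob)
  interpret pp: product_prob_space "\<lambda>_. D" "UNIV :: (nat \<times> nat) set" by unfold_locales
  have "(\<integral>\<^sup>+x. f x \<partial>(PiM J (\<lambda>_. D))) = (\<integral>\<^sup>+x. f x \<partial>(distr Om (PiM J (\<lambda>_. D)) (\<lambda>x. restrict x J)))"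
    using pp.distr_PiM_restrict_finite[OF J] by simp
  also have "\<dots> = (\<integral>\<^sup>+s. f (restrict s J) \<partial>Om)"
    by (rule nn_integral_distr[OF measurable_restrict_subset]) (use f in simp_all)
  finally show ?thesis by simp
qed

lemma E_speg:
  assumes P: "\<Psi> \<in> borel_measurable borel"
  shows "(\<integral>\<^sup>+s. \<Psi> (speg Fs tau gam om x0 s k) \<partial>Om)
       = (\<integral>\<^sup>+x. \<Psi> (speg Fs tau gam om x0 x k) \<partial>(PiM (Jk tau k) (\<lambda>_. D)))"
proof -
  have "\<And>s. speg Fs tau gam om x0 s k = speg Fs tau gam om x0 (restrict s (Jk tau k)) k"
    by (rule speg_dep) simp
  hence "(\<integral>\<^sup>+s. \<Psi> (speg Fs tau gam om x0 s k) \<partial>Om) = (\<integral>\<^sup>+s. \<Psi> (speg Fs tau gam om x0 (restrict s (Jk tau k)) k) \<partial>Om)"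
    by simp
  also have "\<dots> = (\<integral>\<^sup>+x. \<Psi> (speg Fs tau gam om x0 x k) \<partial>(PiM (Jk tau k) (\<lambda>_. D)))"
    using measurable_comp[OF meas_speg_pair[OF order_refl] P]
    by (intro restr[OF Jk_finite, where f="\<lambda>x. \<Psi> (speg Fs tau gam om x0 x k)"]) (simp add: comp_def)
  finally show ?thesis .
qed

lemma step_Om:
  assumes P: "\<Psi> \<in> borel_measurable borel" and Bm: "Bd \<in> borel_measurable borel"
    and B: "\<And>st. (\<integral>\<^sup>+y. \<Psi> (nextst gam om st (minibatch Fs tau y (Suc k) (snd st))) \<partial>(PiM (Pair (Suc k) ` {..<tau}) (\<lambda>_. D))) \<le> Bd st"
  shows "(\<integral>\<^sup>+s. \<Psi> (speg Fs tau gam om x0 s (Suc k)) \<partial>Om) \<le> (\<integral>\<^sup>+s. Bd (speg Fs tau gam om x0 s k) \<partial>Om)"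
proof -
  interpret Dp: prob_space D by (rule D_prob)
  interpret pp: product_prob_space "\<lambda>_. D" "UNIV :: (nat \<times> nat) set" by unfold_locales
  let ?J = "Jk tau k" and ?Q = "Pair (Suc k) ` {..<tau}"
  have mf: "(\<lambda>x. \<Psi> (speg Fs tau gam om x0 x (Suc k))) \<in> borel_measurable (PiM (?J \<union> ?Q) (\<lambda>_. D))"
    using measurable_comp[OF meas_speg_pair[of tau "Suc k", OF order_refl] P] by (simp add: comp_def Jk_Suc)
  have eq: "\<And>x y. speg Fs tau gam om x0 (merge ?J ?Q (x, y)) (Suc k)
      = nextst gam om (speg Fs tau gam om x0 x k) (minibatch Fs tau y (Suc k) (snd (speg Fs tau gam om x0 x k)))"
  proof -
    fix x y
    have "speg Fs tau gam om x0 (merge ?J ?Q (x, y)) k = speg Fs tau gam om x0 x k"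
      by (rule speg_dep) (simp add: merge_def)
    moreover have "\<And>z. minibatch Fs tau (merge ?J ?Q (x, y)) (Suc k) z = minibatch Fs tau y (Suc k) z"
      by (rule minibatch_dep) (auto simp: merge_def Jk_def)
    ultimately show "?thesis x y" by (simp del: speg.simps add: speg_Suc')
  qed
  have "(\<integral>\<^sup>+s. \<Psi> (speg Fs tau gam om x0 s (Suc k)) \<partial>Om)
      = (\<integral>\<^sup>+x. \<Psi> (speg Fs tau gam om x0 x (Suc k)) \<partial>(PiM (?J \<union> ?Q) (\<lambda>_. D)))"
    using E_speg[OF P, of tau gam om x0 "Suc k"] by (simp add: Jk_Suc)
  also have "\<dots> = (\<integral>\<^sup>+x. (\<integral>\<^sup>+y. \<Psi> (speg Fs tau gam om x0 (merge ?J ?Q (x, y)) (Suc k)) \<partial>(PiM ?Q (\<lambda>_. D))) \<partial>(PiM ?J (\<lambda>_. D)))"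
    by (rule pp.product_nn_integral_fold[OF Jk_disj Jk_finite _ mf]) simp
  also have "\<dots> \<le> (\<integral>\<^sup>+x. Bd (speg Fs tau gam om x0 x k) \<partial>(PiM ?J (\<lambda>_. D)))"
    unfolding eq by (intro nn_integral_mono B)
  also have "\<dots> = (\<integral>\<^sup>+s. Bd (speg Fs tau gam om x0 s k) \<partial>Om)"
    using E_speg[OF Bm] by simp
  finally show ?thesis .
qed

end

locale mainloc = spegloc Fs xstar D \<delta>
  for Fs :: "'n::finite \<Rightarrow> real^'d \<Rightarrow> real^'d" and xstar D \<delta> +
  fixes L \<rho> \<gamma> \<omega> :: real and \<tau> K :: nat and x0 :: "real^'d"
  assumes lip: "L-lipschitz_on UNIV (Fbar Fs)"
    and minty: "\<forall>x. inner (Fbar Fs x) (x - xstar) \<ge> - \<rho> * (norm (Fbar Fs x))\<^sup>2"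
    and rho_pos: "0 < \<rho>" and rho_lt: "\<rho> < 1 / (2 * L)"
    and gamma_lo: "max (2 * \<rho>) (1 / (2 * L)) < \<gamma>" and gamma_hi: "\<gamma> < 1 / L"
    and omega_pos: "0 < \<omega>" and omega_hi: "\<omega> < min (\<gamma> - 2 * \<rho>) (1 / (4 * L) - \<gamma> / 4)"
    and x0_ne: "x0 \<noteq> xstar"
    and K_ge: "2 \<le> K"
    and tau_ge: "real \<tau> \<ge> max 1 (max (32 * \<delta> / ((1 - L * \<gamma>) * L ^ 3 * \<omega>))
                  (max (48 * \<omega> * \<gamma> * \<delta> * (real K - 1) / (1 - L * \<gamma>)\<^sup>2)
                       (2 * \<omega> * \<gamma> * (\<integral>v. (norm (Fv Fs v xstar))\<^sup>2 \<partial>D) * (real K - 1)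
                          / ((1 - L * \<gamma>) * (norm (x0 - xstar))\<^sup>2))))"
begin

abbreviation "F \<equiv> Fbar Fs"
definition "\<beta> = L * \<gamma>"
definition "lam = L * \<omega>"
definition "R2 = (norm (x0 - xstar))\<^sup>2"

lemma L_pos: "0 < L"
proof (rule ccontr)
  assume "\<not> 0 < L" hence "1 / (2 * L) \<le> 0" by (simp add: divide_nonpos_nonneg)
  thus False using rho_pos rho_lt by linarith
qed

lemma gamma_pos: "0 < \<gamma>" using gamma_lo rho_pos by linarith

lemma beta_lo: "1/2 < \<beta>"
proof -
  have "1 / (2 * L) < \<gamma>" using gamma_lo by simp
  thus ?thesis unfolding \<beta>_def using L_pos by (simp add: field_simps)
qed

lemma beta_hi: "\<beta> < 1"
  using gamma_hi L_pos unfolding \<beta>_def by (simp add: field_simps)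

lemma lam_pos: "0 < lam" unfolding lam_def using L_pos omega_pos by simp

lemma lam_hi: "4 * lam < 1 - \<beta>"
proof -
  have "\<omega> < 1 / (4 * L) - \<gamma> / 4" using omega_hi by simp
  hence "4 * L * \<omega> < 4 * L * (1 / (4 * L) - \<gamma> / 4)" using L_pos by simp
  also have "\<dots> = 1 - L * \<gamma>" using L_pos by (simp add: field_simps)
  finally show ?thesis unfolding lam_def \<beta>_def by simp
qed

lemma omega_lt: "\<omega> < \<gamma> - 2 * \<rho>" using omega_hi by simp

lemma R2_pos: "0 < R2" unfolding R2_def using x0_ne by simp

lemma tau_pos: "0 < \<tau>" using tau_ge by simp

lemma tau1: "32 * \<delta> / ((1 - \<beta>) * L\<^sup>2 * lam) \<le> real \<tau>"
  using tau_ge unfolding \<beta>_def lam_def by (simp add: power2_eq_square power3_eq_cube mult.assoc)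

lemma tau2: "48 * \<omega> * \<gamma> * \<delta> * (real K - 1) / (1 - \<beta>)\<^sup>2 \<le> real \<tau>"
  using tau_ge unfolding \<beta>_def by simp

lemma tau3: "2 * \<omega> * \<gamma> * \<sigma>2 * (real K - 1) / ((1 - \<beta>) * R2) \<le> real \<tau>"
  using tau_ge unfolding \<beta>_def R2_def \<sigma>2_def by simp

lemma delta_tau1: "\<delta> / real \<tau> \<le> (1 - \<beta>) * L\<^sup>2 * lam / 32"
proof -
  have pos: "0 < (1 - \<beta>) * L\<^sup>2 * lam" using beta_hi L_pos lam_pos by simp
  have "32 * \<delta> \<le> real \<tau> * ((1 - \<beta>) * L\<^sup>2 * lam)"
    using tau1 pos by (simp add: divide_le_eq)
  thus ?thesis using tau_pos by (simp add: field_simps)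
qed

lemma delta_tau2: "\<delta> * (real K - 1) / real \<tau> \<le> (1 - \<beta>)\<^sup>2 / (48 * \<omega> * \<gamma>)"
proof -
  have pos: "0 < (1 - \<beta>)\<^sup>2" using beta_hi by simp
  have "48 * \<omega> * \<gamma> * \<delta> * (real K - 1) \<le> real \<tau> * (1 - \<beta>)\<^sup>2"
    using tau2 pos by (simp add: divide_le_eq)
  thus ?thesis using tau_pos omega_pos gamma_pos by (simp add: field_simps)
qed

lemma sigma_tau: "\<sigma>2 * (real K - 1) / real \<tau> \<le> (1 - \<beta>) * R2 / (2 * \<omega> * \<gamma>)"
proof -
  have pos: "0 < (1 - \<beta>) * R2" using beta_hi R2_pos by simp
  have "2 * \<omega> * \<gamma> * \<sigma>2 * (real K - 1) \<le> real \<tau> * ((1 - \<beta>) * R2)"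
    using tau3 pos by (simp add: divide_le_eq)
  thus ?thesis using tau_pos omega_pos gamma_pos by (simp add: field_simps)
qed

definition "A = 2 * \<omega> * \<gamma> / (1 - \<beta>)"
definition "N = 7 * \<omega> * \<gamma> / (1 - \<beta>)\<^sup>2"
definition "eps = 2 * N * \<delta> / real \<tau>"
definition "eta = 2 * N * \<sigma>2 / real \<tau>"
definition "ca = 3 * \<omega> * \<gamma> / 8 - 4 * \<omega> * \<gamma> * lam\<^sup>2 / (1 - \<beta>)\<^sup>2"
definition "th2 = (1 + \<beta>) / 2"
definition "Phi st = (norm (fst st - xstar))\<^sup>2 + A * (norm (F (snd st) - (1 / \<gamma>) *\<^sub>R (fst st - snd st)))\<^sup>2"

lemma A_pos: "0 < A" unfolding A_def using omega_pos gamma_pos beta_hi by simp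
lemma th2_bounds: "0 < th2" "th2 < 1" unfolding th2_def using beta_lo beta_hi by auto

definition "q = 1 / (1 - \<beta>)"

lemma q_facts: "(1 - \<beta>) * q = 1" "2 \<le> q" "0 < q"
proof -
  show "(1 - \<beta>) * q = 1" unfolding q_def using beta_hi by simp
  show "2 \<le> q" unfolding q_def using beta_hi beta_lo by (simp add: field_simps)
  thus "0 < q" by simp
qed

lemma lam_q: "lam * q \<le> 1/4"
proof -
  have "lam * q = lam / (1 - \<beta>)" unfolding q_def by simp
  also have "\<dots> \<le> 1/4" using lam_hi beta_hi by (simp add: field_simps)
  finally show ?thesis .
qed

lemma A_q: "A = 2 * \<omega> * \<gamma> * q" unfolding A_def q_def by simp
lemma N_q: "N = 7 * \<omega> * \<gamma> * q\<^sup>2" unfolding N_def q_def by (simp add: power_divide)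
lemma ca_q: "ca = 3 * \<omega> * \<gamma> / 8 - 4 * \<omega> * \<gamma> * lam\<^sup>2 * q\<^sup>2"
  unfolding ca_def q_def by (simp add: power_divide)

lemma coefS2:
  fixes U Aa :: real
  shows "(L\<^sup>2 / th2) * (\<gamma>\<^sup>2 * U / (2 * \<beta> / (1 + \<beta>)) + \<omega>\<^sup>2 * Aa / (1 - 2 * \<beta> / (1 + \<beta>)))
         = \<beta> * U + 2 * lam\<^sup>2 * q * Aa"
proof -
  have b: "0 < \<beta>" "\<beta> < 1" using beta_lo beta_hi by auto
  have nz: "1 + \<beta> \<noteq> 0" "\<beta> \<noteq> 0" "1 - \<beta> \<noteq> 0" using b by auto
  have gL: "L\<^sup>2 * \<gamma>\<^sup>2 = \<beta>\<^sup>2" unfolding \<beta>_def by (simp add: power_mult_distrib)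
  have oL: "L\<^sup>2 * \<omega>\<^sup>2 = lam\<^sup>2" unfolding lam_def by (simp add: power_mult_distrib)
  have t1: "th2 * (2 * \<beta> / (1 + \<beta>)) = \<beta>" unfolding th2_def using nz by simp
  have t2: "th2 * (1 - 2 * \<beta> / (1 + \<beta>)) = (1 - \<beta>) / 2" unfolding th2_def using nz by (simp add: field_simps)
  have e1: "(L\<^sup>2 / th2) * (\<gamma>\<^sup>2 * U / (2 * \<beta> / (1 + \<beta>))) = \<beta> * U"
  proof -
    have "(L\<^sup>2 / th2) * (\<gamma>\<^sup>2 * U / (2 * \<beta> / (1 + \<beta>))) = (L\<^sup>2 * \<gamma>\<^sup>2) * U / (th2 * (2 * \<beta> / (1 + \<beta>)))"
      by (simp add: times_divide_times_eq mult.assoc)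
    also have "\<dots> = \<beta>\<^sup>2 * U / \<beta>" unfolding t1 gL ..
    also have "\<dots> = \<beta> * U" using nz by (simp add: power2_eq_square)
    finally show ?thesis .
  qed
  have e2: "(L\<^sup>2 / th2) * (\<omega>\<^sup>2 * Aa / (1 - 2 * \<beta> / (1 + \<beta>))) = 2 * lam\<^sup>2 * q * Aa"
  proof -
    have "(L\<^sup>2 / th2) * (\<omega>\<^sup>2 * Aa / (1 - 2 * \<beta> / (1 + \<beta>))) = (L\<^sup>2 * \<omega>\<^sup>2) * Aa / (th2 * (1 - 2 * \<beta> / (1 + \<beta>)))"
      by (simp add: times_divide_times_eq mult.assoc)
    also have "\<dots> = lam\<^sup>2 * Aa / ((1 - \<beta>) / 2)" unfolding t2 oL ..
    also have "\<dots> = 2 * lam\<^sup>2 * q * Aa" unfolding q_def using nz by simp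
    finally show ?thesis .
  qed
  show ?thesis by (simp only: distrib_left e1 e2)
qed

lemma coefS3: "\<omega>\<^sup>2 + A * (L\<^sup>2 / th2) * (\<gamma> + \<omega>)\<^sup>2 + A * (1 / (1 - th2)) \<le> N"
proof -
  have b: "1/2 < \<beta>" "\<beta> < 1" using beta_lo beta_hi by auto
  have bl: "\<beta> + lam \<le> 1" using lam_hi lam_pos by linarith
  have "L\<^sup>2 * (\<gamma> + \<omega>)\<^sup>2 = (\<beta> + lam)\<^sup>2" unfolding \<beta>_def lam_def by (simp add: power2_eq_square algebra_simps)
  also have "\<dots> \<le> 1" using bl lam_pos b by (simp add: power_le_one)
  finally have c1: "L\<^sup>2 * (\<gamma> + \<omega>)\<^sup>2 \<le> 1" .
  have "L\<^sup>2 / th2 * (\<gamma> + \<omega>)\<^sup>2 = (L\<^sup>2 * (\<gamma> + \<omega>)\<^sup>2) * (2 / (1 + \<beta>))" unfolding th2_def by simp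
  also have "\<dots> \<le> 1 * (4/3)" using c1 b by (intro mult_mono) (auto simp: field_simps)
  finally have c2: "L\<^sup>2 / th2 * (\<gamma> + \<omega>)\<^sup>2 \<le> 4/3" by simp
  have c3: "1 / (1 - th2) = 2 * q" unfolding th2_def q_def using b by (simp add: field_simps)
  define W where "W = \<omega> * \<gamma>"
  have Wp: "0 < W" unfolding W_def using omega_pos gamma_pos by simp
  have q2: "2 \<le> q" "0 < q" using q_facts by auto
  have wg: "\<omega>\<^sup>2 \<le> W" unfolding W_def using omega_lt rho_pos omega_pos by (simp add: power2_eq_square)
  have qq2: "2 * q \<le> q * q" using mult_right_mono[OF q2(1), of q] q2 by simp
  have qq: "1 \<le> q\<^sup>2" "2 * q \<le> q\<^sup>2" using qq2 q2 unfolding power2_eq_square by linarith+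
  have "W * 1 \<le> W * q\<^sup>2" using mult_left_mono[OF qq(1), of W] Wp by simp
  hence f1: "\<omega>\<^sup>2 \<le> W * q\<^sup>2" using wg by simp
  have "A * (L\<^sup>2 / th2) * (\<gamma> + \<omega>)\<^sup>2 \<le> A * (4/3)"
    using mult_left_mono[OF c2, of A] A_pos by (simp add: mult.assoc)
  also have "A * (4/3) = (4/3) * (W * (2 * q))" unfolding A_q W_def by simp
  also have "\<dots> \<le> (4/3) * (W * q\<^sup>2)" using mult_left_mono[OF qq(2), of W] Wp by simp
  finally have f2: "A * (L\<^sup>2 / th2) * (\<gamma> + \<omega>)\<^sup>2 \<le> (4/3) * (W * q\<^sup>2)" .
  have f3: "A * (1 / (1 - th2)) = 4 * (W * q\<^sup>2)" unfolding c3 A_q W_def by (simp add: power2_eq_square)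
  have f4: "N = 7 * (W * q\<^sup>2)" unfolding N_q W_def by simp
  have "0 \<le> W * q\<^sup>2" using Wp by simp
  thus ?thesis using f1 f2 f3 f4 by linarith
qed

lemma coefS6: "2 * N * \<delta> * \<gamma>\<^sup>2 / real \<tau> \<le> \<omega> * \<gamma> / 4"
proof -
  have dt: "\<delta> / real \<tau> \<le> (1 - \<beta>) * L\<^sup>2 * lam / 32" by (rule delta_tau1)
  have gL: "\<gamma>\<^sup>2 * L\<^sup>2 = \<beta>\<^sup>2" unfolding \<beta>_def by (simp add: power_mult_distrib)
  have "2 * N * \<delta> * \<gamma>\<^sup>2 / real \<tau> = 14 * \<omega> * \<gamma> * q\<^sup>2 * \<gamma>\<^sup>2 * (\<delta> / real \<tau>)"
    unfolding N_q by simp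
  also have "\<dots> \<le> 14 * \<omega> * \<gamma> * q\<^sup>2 * \<gamma>\<^sup>2 * ((1 - \<beta>) * L\<^sup>2 * lam / 32)"
    using dt omega_pos gamma_pos q_facts by (intro mult_left_mono) auto
  also have "\<dots> = (14/32) * (\<omega> * \<gamma>) * ((1 - \<beta>) * q) * (\<gamma>\<^sup>2 * L\<^sup>2) * (lam * q)"
    by (simp add: power2_eq_square field_simps)
  also have "\<dots> = (14/32) * (\<omega> * \<gamma>) * \<beta>\<^sup>2 * (lam * q)"
    using q_facts(1) gL by simp
  also have "\<dots> \<le> (14/32) * (\<omega> * \<gamma>) * 1 * (1/4)"
    using lam_q beta_lo beta_hi omega_pos gamma_pos lam_pos q_facts
    by (intro mult_mono) (auto simp: power_le_one)
  finally have c: "2 * N * \<delta> * \<gamma>\<^sup>2 / real \<tau> \<le> 14/32 * (\<omega> * \<gamma>) * 1 * (1/4)" .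
  have "0 < \<omega> * \<gamma>" using omega_pos gamma_pos by simp
  thus ?thesis using c by linarith
qed

end

lemma nn3:
  assumes "f1 \<in> borel_measurable M" "f2 \<in> borel_measurable M" "f3 \<in> borel_measurable M"
  shows "(\<integral>\<^sup>+y. f1 y + Ca * f2 y + Cb * f3 y \<partial>M) = (\<integral>\<^sup>+y. f1 y \<partial>M) + Ca * (\<integral>\<^sup>+y. f2 y \<partial>M) + Cb * (\<integral>\<^sup>+y. f3 y \<partial>M)"
  using assms by (simp add: nn_integral_add nn_integral_cmult)

lemma ennreal3:
  fixes x1 C1 x2 C2 x3 :: real
  assumes "0 \<le> x1" "0 \<le> C1" "0 \<le> x2" "0 \<le> C2" "0 \<le> x3"
  shows "ennreal x1 + ennreal C1 * ennreal x2 + ennreal C2 * ennreal x3 = ennreal (x1 + C1 * x2 + C2 * x3)"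
  using assms by (simp add: ennreal_mult ennreal_plus)

lemma norm_diff_scaleR_sq:
  fixes r a :: "'a::real_inner"
  shows "(norm (r - c *\<^sub>R a))\<^sup>2 = (norm r)\<^sup>2 - 2 * c * inner a r + c\<^sup>2 * (norm a)\<^sup>2"
  unfolding power2_norm_eq_inner
  by (simp add: inner_diff_left inner_diff_right inner_commute power2_eq_square algebra_simps)

context mainloc begin

lemma onestep_real:
  fixes x xh :: "real^'d"
  assumes VE0: "0 \<le> VE" and VEle: "VE \<le> (\<delta> * (norm (xh - xstar))\<^sup>2 + 2 * \<sigma>2) / real \<tau>"
  shows "(norm ((x - xstar) - \<omega> *\<^sub>R F xh))\<^sup>2
     + A * (L\<^sup>2 / th2) * (norm (\<gamma> *\<^sub>R (F xh - (1 / \<gamma>) *\<^sub>R (x - xh)) + \<omega> *\<^sub>R F xh))\<^sup>2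
     + (\<omega>\<^sup>2 + A * (L\<^sup>2 / th2) * (\<gamma> + \<omega>)\<^sup>2 + A * (1 / (1 - th2))) * VE
     \<le> (1 + eps) * Phi (x, xh) + eta - ca * (norm (F xh))\<^sup>2"
proof -
  define r where "r = x - xstar"
  define a where "a = F xh"
  define p where "p = (1 / \<gamma>) *\<^sub>R (x - xh)"
  define u where "u = a - p"
  define R where "R = (norm r)\<^sup>2"
  define P where "P = (norm p)\<^sup>2"
  define U where "U = (norm u)\<^sup>2"
  define Aa where "Aa = (norm a)\<^sup>2"
  have gnz: "\<gamma> \<noteq> 0" using gamma_pos by simp
  have og: "0 < \<omega> * \<gamma>" using omega_pos gamma_pos by simp
  have rxh: "r = (xh - xstar) + \<gamma> *\<^sub>R p" unfolding r_def p_def using gnz by simp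
  have S1: "(norm (r - \<omega> *\<^sub>R a))\<^sup>2 \<le> R - \<omega> * \<gamma> * P + \<omega> * \<gamma> * U"
  proof -
    have m: "inner a (xh - xstar) \<ge> - \<rho> * Aa" using minty unfolding a_def Aa_def by auto
    have ir: "inner a r = inner a (xh - xstar) + \<gamma> * inner a p"
      by (subst rxh) (simp add: inner_add_right)
    have e1: "(norm (r - \<omega> *\<^sub>R a))\<^sup>2 = R - 2 * \<omega> * inner a (xh - xstar) - 2 * \<omega> * \<gamma> * inner a p + \<omega>\<^sup>2 * Aa"
      unfolding norm_diff_scaleR_sq ir R_def Aa_def by (simp add: algebra_simps)
    have e2: "U = Aa - 2 * inner a p + P"
      unfolding U_def Aa_def P_def u_def power2_norm_eq_inner
      by (simp add: inner_diff_left inner_diff_right inner_commute)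
    have "\<omega> * (\<gamma> - 2 * \<rho> - \<omega>) * Aa \<ge> 0"
      using omega_lt omega_pos unfolding Aa_def by simp
    hence "0 \<le> \<omega> * \<gamma> * Aa - 2 * \<omega> * \<rho> * Aa - \<omega>\<^sup>2 * Aa" by (simp add: power2_eq_square algebra_simps)
    moreover have "2 * \<omega> * inner a (xh - xstar) \<ge> 2 * \<omega> * (- \<rho> * Aa)"
      using mult_left_mono[OF m, of "2 * \<omega>"] omega_pos by simp
    ultimately show ?thesis unfolding e1 by (simp add: e2 algebra_simps, linarith?)
  qed
  have S2: "A * (L\<^sup>2 / th2) * (norm (\<gamma> *\<^sub>R u + \<omega> *\<^sub>R a))\<^sup>2 \<le> A * \<beta> * U + 4 * \<omega> * \<gamma> * lam\<^sup>2 * q\<^sup>2 * Aa"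
  proof -
    have t1: "0 < 2 * \<beta> / (1 + \<beta>)" "2 * \<beta> / (1 + \<beta>) < 1" using beta_lo beta_hi by (auto simp: field_simps)
    have "(norm (\<gamma> *\<^sub>R u + \<omega> *\<^sub>R a))\<^sup>2 \<le> (norm (\<gamma> *\<^sub>R u))\<^sup>2 / (2 * \<beta> / (1 + \<beta>)) + (norm (\<omega> *\<^sub>R a))\<^sup>2 / (1 - 2 * \<beta> / (1 + \<beta>))"
      by (rule young_norm[OF t1])
    also have "\<dots> = \<gamma>\<^sup>2 * U / (2 * \<beta> / (1 + \<beta>)) + \<omega>\<^sup>2 * Aa / (1 - 2 * \<beta> / (1 + \<beta>))"
      unfolding U_def Aa_def by (simp add: power_mult_distrib)
    finally have "(L\<^sup>2 / th2) * (norm (\<gamma> *\<^sub>R u + \<omega> *\<^sub>R a))\<^sup>2 \<le> (L\<^sup>2 / th2) * (\<gamma>\<^sup>2 * U / (2 * \<beta> / (1 + \<beta>)) + \<omega>\<^sup>2 * Aa / (1 - 2 * \<beta> / (1 + \<beta>)))"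
      using th2_bounds by (intro mult_left_mono) auto
    also have "\<dots> = \<beta> * U + 2 * lam\<^sup>2 * q * Aa" by (rule coefS2)
    finally have "A * ((L\<^sup>2 / th2) * (norm (\<gamma> *\<^sub>R u + \<omega> *\<^sub>R a))\<^sup>2) \<le> A * (\<beta> * U + 2 * lam\<^sup>2 * q * Aa)"
      using A_pos by (intro mult_left_mono) auto
    thus ?thesis unfolding A_q by (simp add: power2_eq_square algebra_simps)
  qed
  have S3: "(\<omega>\<^sup>2 + A * (L\<^sup>2 / th2) * (\<gamma> + \<omega>)\<^sup>2 + A * (1 / (1 - th2))) * VE \<le> N * VE"
    using coefS3 VE0 by (rule mult_right_mono)
  have S5: "Aa \<le> 2 * P + 2 * U"
  proof -
    have "a = p + u" unfolding u_def by simp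
    hence "Aa = (norm (p + u))\<^sup>2" unfolding Aa_def by simp
    also have "\<dots> \<le> (norm p)\<^sup>2 / (1/2) + (norm u)\<^sup>2 / (1 - 1/2)" by (rule young_norm) auto
    finally show ?thesis unfolding P_def U_def by simp
  qed
  have S6a: "(norm (xh - xstar))\<^sup>2 \<le> 2 * R + 2 * \<gamma>\<^sup>2 * P"
  proof -
    have "xh - xstar = r + (- \<gamma>) *\<^sub>R p" unfolding rxh by simp
    hence "(norm (xh - xstar))\<^sup>2 = (norm (r + (- \<gamma>) *\<^sub>R p))\<^sup>2" by simp
    also have "\<dots> \<le> (norm r)\<^sup>2 / (1/2) + (norm ((- \<gamma>) *\<^sub>R p))\<^sup>2 / (1 - 1/2)" by (rule young_norm) auto
    finally show ?thesis unfolding R_def P_def by (simp add: power_mult_distrib)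
  qed
  have S6: "N * VE \<le> eps * R + \<omega> * \<gamma> / 4 * P + eta"
  proof -
    have Np: "0 \<le> N" unfolding N_q using omega_pos gamma_pos by simp
    have "N * VE \<le> N * ((\<delta> * (norm (xh - xstar))\<^sup>2 + 2 * \<sigma>2) / real \<tau>)"
      using VEle Np by (rule mult_left_mono)
    also have "\<dots> \<le> N * ((\<delta> * (2 * R + 2 * \<gamma>\<^sup>2 * P) + 2 * \<sigma>2) / real \<tau>)"
      using S6a Np delta_nonneg tau_pos by (intro mult_left_mono divide_right_mono add_right_mono mult_left_mono) auto
    also have "\<dots> = eps * R + (2 * N * \<delta> * \<gamma>\<^sup>2 / real \<tau>) * P + eta"
      unfolding eps_def eta_def by (simp add: add_divide_distrib algebra_simps)
    also have "\<dots> \<le> eps * R + \<omega> * \<gamma> / 4 * P + eta"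
      using coefS6 by (intro add_right_mono add_left_mono mult_right_mono) (auto simp: P_def)
    finally show ?thesis .
  qed
  have epsnn: "0 \<le> eps" unfolding eps_def N_q using omega_pos gamma_pos delta_nonneg tau_pos
    by (intro divide_nonneg_nonneg mult_nonneg_nonneg) auto
  have AU: "0 \<le> eps * (A * U)" using epsnn A_pos by (simp add: U_def)
  have bq: "\<beta> * q = q - 1" using q_facts(1) by (simp add: algebra_simps)
  have "A * \<beta> = 2 * \<omega> * \<gamma> * (\<beta> * q)" unfolding A_q by (simp add: mult_ac)
  also have "\<dots> = 2 * \<omega> * \<gamma> * (q - 1)" by (simp only: bq)
  also have "\<dots> = A - 2 * \<omega> * \<gamma>" unfolding A_q by (simp add: algebra_simps)
  finally have Ab: "A * \<beta> = A - 2 * \<omega> * \<gamma>" .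
  have Phi_eq: "Phi (x, xh) = R + A * U" unfolding Phi_def R_def U_def r_def u_def a_def p_def by simp
  have cS5: "3 * \<omega> * \<gamma> / 8 * Aa \<le> 3 * \<omega> * \<gamma> / 8 * (2 * P + 2 * U)"
    using S5 omega_pos gamma_pos by (intro mult_left_mono) auto
  have PU: "0 \<le> P" "0 \<le> U" unfolding P_def U_def by auto
  have S2': "A * (L\<^sup>2 / th2) * (norm (\<gamma> *\<^sub>R u + \<omega> *\<^sub>R a))\<^sup>2 \<le> A * U - 2 * \<omega> * \<gamma> * U + 4 * \<omega> * \<gamma> * lam\<^sup>2 * q\<^sup>2 * Aa"
  proof -
    have "A * \<beta> * U = (A - 2 * \<omega> * \<gamma>) * U" using Ab by simp
    also have "\<dots> = A * U - 2 * \<omega> * \<gamma> * U" by (simp add: left_diff_distrib)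
    finally have "A * \<beta> * U = A * U - 2 * \<omega> * \<gamma> * U" .
    thus ?thesis using S2 by simp
  qed
  have mid: "(norm (r - \<omega> *\<^sub>R a))\<^sup>2 + A * (L\<^sup>2 / th2) * (norm (\<gamma> *\<^sub>R u + \<omega> *\<^sub>R a))\<^sup>2
       + (\<omega>\<^sup>2 + A * (L\<^sup>2 / th2) * (\<gamma> + \<omega>)\<^sup>2 + A * (1 / (1 - th2))) * VE
     \<le> (R - \<omega> * \<gamma> * P + \<omega> * \<gamma> * U) + (A * U - 2 * \<omega> * \<gamma> * U + 4 * \<omega> * \<gamma> * lam\<^sup>2 * q\<^sup>2 * Aa)
       + (eps * R + \<omega> * \<gamma> / 4 * P + eta)"
    using S1 S2' S3 S6 by linarith
  have WU: "0 \<le> \<omega> * \<gamma> * U" using og PU by simp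
  have fin: "(R - \<omega> * \<gamma> * P + \<omega> * \<gamma> * U) + (A * U - 2 * \<omega> * \<gamma> * U + 4 * \<omega> * \<gamma> * lam\<^sup>2 * q\<^sup>2 * Aa)
       + (eps * R + \<omega> * \<gamma> / 4 * P + eta) \<le> (1 + eps) * (R + A * U) + eta - (3 * \<omega> * \<gamma> / 8 - 4 * \<omega> * \<gamma> * lam\<^sup>2 * q\<^sup>2) * Aa"
    using AU cS5 WU by (simp add: algebra_simps, linarith?)
  have lhs_eq: "(norm ((x - xstar) - \<omega> *\<^sub>R F xh))\<^sup>2
     + A * (L\<^sup>2 / th2) * (norm (\<gamma> *\<^sub>R (F xh - (1 / \<gamma>) *\<^sub>R (x - xh)) + \<omega> *\<^sub>R F xh))\<^sup>2
     + (\<omega>\<^sup>2 + A * (L\<^sup>2 / th2) * (\<gamma> + \<omega>)\<^sup>2 + A * (1 / (1 - th2))) * VE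
     = (norm (r - \<omega> *\<^sub>R a))\<^sup>2 + A * (L\<^sup>2 / th2) * (norm (\<gamma> *\<^sub>R u + \<omega> *\<^sub>R a))\<^sup>2
       + (\<omega>\<^sup>2 + A * (L\<^sup>2 / th2) * (\<gamma> + \<omega>)\<^sup>2 + A * (1 / (1 - th2))) * VE"
    unfolding r_def a_def u_def p_def by (rule refl)
  have rhs_eq: "(1 + eps) * Phi (x, xh) + eta - ca * (norm (F xh))\<^sup>2
     = (1 + eps) * (R + A * U) + eta - (3 * \<omega> * \<gamma> / 8 - 4 * \<omega> * \<gamma> * lam\<^sup>2 * q\<^sup>2) * Aa"
    unfolding Phi_eq ca_q Aa_def a_def by (rule refl)
  show ?thesis unfolding lhs_eq rhs_eq using mid fin by linarith
qed

lemma meas_e: "(\<lambda>y. minibatch Fs \<tau> y m z - F z) \<in> borel_measurable (PiM (Pair m ` {..<\<tau>}) (\<lambda>_. D))"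
proof -
  have "(\<lambda>s. minibatch Fs \<tau> s m z) \<in> borel_measurable (PiM (Pair m ` {..<\<tau>}) (\<lambda>_. D))"
    by (rule meas_minibatch[OF order_refl]) simp
  thus ?thesis by (intro borel_measurable_diff) auto
qed

lemma pt_gen:
  fixes x xh g :: "real^'d"
  shows "Phi (nextst \<gamma> \<omega> (x, xh) g)
     \<le> (norm (((x - xstar) - \<omega> *\<^sub>R F xh) + (- \<omega>) *\<^sub>R (g - F xh)))\<^sup>2
        + A * (L\<^sup>2 / th2) * (norm (- (\<gamma> *\<^sub>R (F xh - (1 / \<gamma>) *\<^sub>R (x - xh)) + \<omega> *\<^sub>R F xh) + (- (\<gamma> + \<omega>)) *\<^sub>R (g - F xh)))\<^sup>2
        + A * (1 / (1 - th2)) * (norm (0 + 1 *\<^sub>R (g - F xh)))\<^sup>2"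
proof -
  define a where "a = F xh"
  define e where "e = g - a"
  define c1 where "c1 = (x - xstar) - \<omega> *\<^sub>R a"
  define p where "p = (1 / \<gamma>) *\<^sub>R (x - xh)"
  define c2 where "c2 = - (\<gamma> *\<^sub>R (a - p) + \<omega> *\<^sub>R a)"
  define k2 where "k2 = - (\<gamma> + \<omega>)"
  define xh' where "xh' = x - \<omega> *\<^sub>R g - \<gamma> *\<^sub>R g"
  have gnz: "\<gamma> \<noteq> 0" using gamma_pos by simp
  have g: "g = a + e" unfolding e_def by simp
  have n1: "fst (nextst \<gamma> \<omega> (x, xh) g) - xstar = c1 + (- \<omega>) *\<^sub>R e"
    unfolding nextst_def c1_def fst_conv g by (simp add: algebra_simps)
  have n2: "F (snd (nextst \<gamma> \<omega> (x, xh) g)) - (1 / \<gamma>) *\<^sub>R (fst (nextst \<gamma> \<omega> (x, xh) g) - snd (nextst \<gamma> \<omega> (x, xh) g))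
          = (F xh' - F xh) + (- e)"
  proof -
    have "fst (nextst \<gamma> \<omega> (x, xh) g) - snd (nextst \<gamma> \<omega> (x, xh) g) = \<gamma> *\<^sub>R g"
      unfolding nextst_def by simp
    hence "(1 / \<gamma>) *\<^sub>R (fst (nextst \<gamma> \<omega> (x, xh) g) - snd (nextst \<gamma> \<omega> (x, xh) g)) = g"
      using gnz by simp
    thus ?thesis unfolding nextst_def xh'_def e_def a_def by simp
  qed
  have dx: "xh' - xh = c2 + k2 *\<^sub>R e"
  proof -
    have hp: "\<gamma> *\<^sub>R p = x - xh" unfolding p_def using gnz by simp
    have "c2 + k2 *\<^sub>R e = \<gamma> *\<^sub>R p - (\<gamma> + \<omega>) *\<^sub>R (a + e)"
      unfolding c2_def k2_def by (simp add: algebra_simps)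
    also have "\<dots> = (x - xh) - (\<gamma> + \<omega>) *\<^sub>R g" unfolding hp g ..
    also have "\<dots> = xh' - xh" unfolding xh'_def by (simp add: algebra_simps)
    finally show ?thesis ..
  qed
  have lipD: "norm (F xh' - F xh) \<le> L * norm (xh' - xh)"
    using lipschitz_onD[OF lip] by (simp add: dist_norm)
  have y1: "(norm ((F xh' - F xh) + (- e)))\<^sup>2 \<le> (norm (F xh' - F xh))\<^sup>2 / th2 + (norm (- e))\<^sup>2 / (1 - th2)"
    by (rule young_norm[OF th2_bounds])
  have y2: "(norm (F xh' - F xh))\<^sup>2 \<le> L\<^sup>2 * (norm (c2 + k2 *\<^sub>R e))\<^sup>2"
  proof -
    have "(norm (F xh' - F xh))\<^sup>2 \<le> (L * norm (xh' - xh))\<^sup>2"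
      using lipD by (intro power_mono) auto
    thus ?thesis unfolding dx by (simp add: power_mult_distrib)
  qed
  have y3: "(norm (F xh' - F xh))\<^sup>2 / th2 \<le> L\<^sup>2 * (norm (c2 + k2 *\<^sub>R e))\<^sup>2 / th2"
    using y2 th2_bounds by (simp add: divide_right_mono)
  define X where "X = (norm (c2 + k2 *\<^sub>R e))\<^sup>2"
  define Y where "Y = (norm (0 + 1 *\<^sub>R e))\<^sup>2"
  have Ye: "(norm (- e))\<^sup>2 = Y" unfolding Y_def by simp
  have y4: "(norm ((F xh' - F xh) + (- e)))\<^sup>2 \<le> L\<^sup>2 * X / th2 + Y / (1 - th2)"
    using y1 y3 unfolding Ye X_def by linarith
  have y5: "A * (norm ((F xh' - F xh) + (- e)))\<^sup>2 \<le> A * (L\<^sup>2 * X / th2 + Y / (1 - th2))"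
    using y4 A_pos by (intro mult_left_mono) auto
  have gen: "A * (L\<^sup>2 * X / th2 + Y / (1 - th2)) = A * (L\<^sup>2 / th2) * X + A * (1 / (1 - th2)) * Y"
    by (simp add: distrib_left)
  have "Phi (nextst \<gamma> \<omega> (x, xh) g) = (norm (c1 + (- \<omega>) *\<^sub>R e))\<^sup>2 + A * (norm ((F xh' - F xh) + (- e)))\<^sup>2"
    unfolding Phi_def n1 n2 ..
  also have "\<dots> \<le> (norm (c1 + (- \<omega>) *\<^sub>R e))\<^sup>2 + (A * (L\<^sup>2 / th2) * X + A * (1 / (1 - th2)) * Y)"
    using y5 unfolding gen by linarith
  finally show ?thesis unfolding X_def Y_def c1_def c2_def k2_def e_def a_def p_def by (simp only: add.assoc)
qed

lemma onestep:
  "(\<integral>\<^sup>+y. ennreal (Phi (nextst \<gamma> \<omega> (x, xh) (minibatch Fs \<tau> y m xh))) \<partial>(PiM (Pair m ` {..<\<tau>}) (\<lambda>_. D)))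
     \<le> ennreal ((1 + eps) * Phi (x, xh) + eta - ca * (norm (F xh))\<^sup>2)"
proof -
  let ?W = "PiM (Pair m ` {..<\<tau>}) (\<lambda>_. D)"
  let ?e = "\<lambda>y. minibatch Fs \<tau> y m xh - F xh"
  define a where "a = F xh"
  define p where "p = (1 / \<gamma>) *\<^sub>R (x - xh)"
  define u where "u = a - p"
  define c1 where "c1 = (x - xstar) - \<omega> *\<^sub>R a"
  define c2 where "c2 = - (\<gamma> *\<^sub>R u + \<omega> *\<^sub>R a)"
  define k2 where "k2 = - (\<gamma> + \<omega>)"
  define VE where "VE = VX xh / real \<tau>"
  have gnz: "\<gamma> \<noteq> 0" using gamma_pos by simp
  have pt: "Phi (nextst \<gamma> \<omega> (x, xh) (minibatch Fs \<tau> y m xh))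
     \<le> (norm (c1 + (- \<omega>) *\<^sub>R ?e y))\<^sup>2 + A * (L\<^sup>2 / th2) * (norm (c2 + k2 *\<^sub>R ?e y))\<^sup>2
        + A * (1 / (1 - th2)) * (norm (0 + 1 *\<^sub>R ?e y))\<^sup>2" for y
    unfolding c1_def c2_def k2_def a_def u_def p_def by (rule pt_gen)
  have m: "\<And>c k. (\<lambda>y. ennreal ((norm (c + k *\<^sub>R ?e y))\<^sup>2)) \<in> borel_measurable ?W"
    using meas_e by measurable
  have "(\<integral>\<^sup>+y. ennreal (Phi (nextst \<gamma> \<omega> (x, xh) (minibatch Fs \<tau> y m xh))) \<partial>?W)
     \<le> (\<integral>\<^sup>+y. ennreal ((norm (c1 + (- \<omega>) *\<^sub>R ?e y))\<^sup>2) + ennreal (A * (L\<^sup>2 / th2)) * ennreal ((norm (c2 + k2 *\<^sub>R ?e y))\<^sup>2)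
        + ennreal (A * (1 / (1 - th2))) * ennreal ((norm (0 + 1 *\<^sub>R ?e y))\<^sup>2) \<partial>?W)"
  proof (rule nn_integral_mono)
    fix y
    show "ennreal (Phi (nextst \<gamma> \<omega> (x, xh) (minibatch Fs \<tau> y m xh)))
      \<le> ennreal ((norm (c1 + (- \<omega>) *\<^sub>R ?e y))\<^sup>2) + ennreal (A * (L\<^sup>2 / th2)) * ennreal ((norm (c2 + k2 *\<^sub>R ?e y))\<^sup>2)
        + ennreal (A * (1 / (1 - th2))) * ennreal ((norm (0 + 1 *\<^sub>R ?e y))\<^sup>2)"
      using pt[of y] A_pos th2_bounds
      by (simp add: ennreal_plus[symmetric] ennreal_mult[symmetric] ennreal_leI del: ennreal_plus)
  qed
  also have "\<dots> = (\<integral>\<^sup>+y. ennreal ((norm (c1 + (- \<omega>) *\<^sub>R ?e y))\<^sup>2) \<partial>?W)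
        + ennreal (A * (L\<^sup>2 / th2)) * (\<integral>\<^sup>+y. ennreal ((norm (c2 + k2 *\<^sub>R ?e y))\<^sup>2) \<partial>?W)
        + ennreal (A * (1 / (1 - th2))) * (\<integral>\<^sup>+y. ennreal ((norm (0 + 1 *\<^sub>R ?e y))\<^sup>2) \<partial>?W)"
    by (rule nn3[OF m m m])
  also have "\<dots> = ennreal ((norm c1)\<^sup>2 + (- \<omega>)\<^sup>2 * VE) + ennreal (A * (L\<^sup>2 / th2)) * ennreal ((norm c2)\<^sup>2 + k2\<^sup>2 * VE)
        + ennreal (A * (1 / (1 - th2))) * ennreal ((norm (0::real^'d))\<^sup>2 + 1\<^sup>2 * VE)"
    unfolding VE_def by (simp only: block[OF tau_pos])
  also have "\<dots> = ennreal ((norm c1)\<^sup>2 + (- \<omega>)\<^sup>2 * VE + A * (L\<^sup>2 / th2) * ((norm c2)\<^sup>2 + k2\<^sup>2 * VE)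
        + A * (1 / (1 - th2)) * ((norm (0::real^'d))\<^sup>2 + 1\<^sup>2 * VE))"
  proof (rule ennreal3)
    have "0 \<le> VE" unfolding VE_def using VX_nonneg tau_pos by simp
    thus "0 \<le> (norm c1)\<^sup>2 + (- \<omega>)\<^sup>2 * VE" "0 \<le> A * (L\<^sup>2 / th2)" "0 \<le> (norm c2)\<^sup>2 + k2\<^sup>2 * VE"
      "0 \<le> A * (1 / (1 - th2))" "0 \<le> (norm (0::real^'d))\<^sup>2 + 1\<^sup>2 * VE"
      using A_pos th2_bounds by auto
  qed
  also have "\<dots> \<le> ennreal ((1 + eps) * Phi (x, xh) + eta - ca * (norm (F xh))\<^sup>2)"
  proof (rule ennreal_leI)
    have VE0: "0 \<le> VE" unfolding VE_def using VX_nonneg tau_pos by simp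
    have VE1: "VE \<le> (\<delta> * (norm (xh - xstar))\<^sup>2 + 2 * \<sigma>2) / real \<tau>"
      unfolding VE_def using VX_le[of xh] tau_pos by (simp add: divide_right_mono)
    show "(norm c1)\<^sup>2 + (- \<omega>)\<^sup>2 * VE + A * (L\<^sup>2 / th2) * ((norm c2)\<^sup>2 + k2\<^sup>2 * VE)
        + A * (1 / (1 - th2)) * ((norm (0::real^'d))\<^sup>2 + 1\<^sup>2 * VE) \<le> (1 + eps) * Phi (x, xh) + eta - ca * (norm (F xh))\<^sup>2"
    proof -
      have g: "\<And>n1 w2 B n2 k C V::real. n1 + w2 * V + B * (n2 + k * V) + C * (0 + 1 * V) = n1 + B * n2 + (w2 + B * k + C) * V"
        by (simp add: algebra_simps)
      have c2n: "(norm c2)\<^sup>2 = (norm (\<gamma> *\<^sub>R (F xh - (1 / \<gamma>) *\<^sub>R (x - xh)) + \<omega> *\<^sub>R F xh))\<^sup>2"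
        unfolding c2_def u_def p_def a_def by (simp only: norm_minus_cancel)
      have k2n: "k2\<^sup>2 = (\<gamma> + \<omega>)\<^sup>2" unfolding k2_def by (simp only: power2_minus)
      have "(norm c1)\<^sup>2 + (- \<omega>)\<^sup>2 * VE + A * (L\<^sup>2 / th2) * ((norm c2)\<^sup>2 + k2\<^sup>2 * VE)
        + A * (1 / (1 - th2)) * ((norm (0::real^'d))\<^sup>2 + 1\<^sup>2 * VE)
        = (norm c1)\<^sup>2 + (- \<omega>)\<^sup>2 * VE + A * (L\<^sup>2 / th2) * ((norm c2)\<^sup>2 + k2\<^sup>2 * VE)
        + A * (1 / (1 - th2)) * (0 + 1 * VE)" by simp
      also have "\<dots> = (norm c1)\<^sup>2 + A * (L\<^sup>2 / th2) * (norm c2)\<^sup>2 + ((- \<omega>)\<^sup>2 + A * (L\<^sup>2 / th2) * k2\<^sup>2 + A * (1 / (1 - th2))) * VE"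
        by (rule g)
      also have "\<dots> \<le> (1 + eps) * Phi (x, xh) + eta - ca * (norm (F xh))\<^sup>2"
        unfolding c2n k2n c1_def a_def using onestep_real[OF VE0 VE1, of x] by simp
      finally show ?thesis .
    qed
  qed
  finally show ?thesis .
qed

end

context mainloc begin

lemma F_meas: "F \<in> borel_measurable borel"
  unfolding Fbar_def using meas
  by (intro borel_measurable_scaleR borel_measurable_const borel_measurable_sum) auto

lemma pair_meas:
  assumes "f \<in> borel_measurable (borel \<Otimes>\<^sub>M borel)"
  shows "(f :: (real^'d) \<times> (real^'d) \<Rightarrow> ennreal) \<in> borel_measurable borel"
  using assms by (simp add: borel_prod)

lemma Phi_meas: "(\<lambda>st. ennreal (Phi st)) \<in> borel_measurable borel"
  by (rule pair_meas) (unfold Phi_def, use F_meas in measurable)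

lemma Fa_meas: "(\<lambda>st::(real^'d) \<times> (real^'d). ennreal ((norm (F (snd st)))\<^sup>2)) \<in> borel_measurable borel"
  by (rule pair_meas) (use F_meas in measurable)

lemma Bd_meas: "(\<lambda>st. ennreal ((1 + eps) * Phi st + eta - ca * (norm (F (snd st)))\<^sup>2)) \<in> borel_measurable borel"
  by (rule pair_meas) (unfold Phi_def, use F_meas in measurable)

lemma eps_nonneg: "0 \<le> eps" unfolding eps_def N_q using omega_pos gamma_pos delta_nonneg tau_pos
  by (intro divide_nonneg_nonneg mult_nonneg_nonneg) auto

lemma eta_nonneg: "0 \<le> eta" unfolding eta_def N_q using omega_pos gamma_pos sigma2_nonneg tau_pos
  by (intro divide_nonneg_nonneg mult_nonneg_nonneg) auto

lemma Phi_nonneg: "0 \<le> Phi st" unfolding Phi_def using A_pos by simp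

lemma ca_lower: "3 * \<omega> * \<gamma> * (1 - L * (\<gamma> + 4 * \<omega>)) * q / 8 \<le> ca"
proof -
  define z where "z = lam * q"
  have z: "0 \<le> z" "z \<le> 1/4" unfolding z_def using lam_q lam_pos q_facts by auto
  have kq: "(1 - L * (\<gamma> + 4 * \<omega>)) * q = 1 - 4 * z"
    unfolding z_def using q_facts(1) unfolding \<beta>_def lam_def by (simp add: algebra_simps)
  have og: "0 < \<omega> * \<gamma>" using omega_pos gamma_pos by simp
  have "z * z \<le> z * (1/4)" using z by (intro mult_left_mono) auto
  hence "4 * z\<^sup>2 \<le> (3/2) * z" using z by (simp add: power2_eq_square)
  hence "(\<omega> * \<gamma>) * (4 * z\<^sup>2) \<le> (\<omega> * \<gamma>) * ((3/2) * z)" using og by (intro mult_left_mono) auto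
  hence "(\<omega> * \<gamma>) * (4 * z\<^sup>2) \<le> (3/2) * ((\<omega> * \<gamma>) * z)" by (simp add: mult_ac)
  moreover have "3 * \<omega> * \<gamma> * (1 - L * (\<gamma> + 4 * \<omega>)) * q / 8 = 3 * (\<omega> * \<gamma>) / 8 - (3/2) * ((\<omega> * \<gamma>) * z)"
  proof -
    have gen: "\<And>a b c d :: real. 3 * a * b * c * d / 8 = 3 * (a * b) / 8 * (c * d)" by simp
    have "3 * \<omega> * \<gamma> * (1 - L * (\<gamma> + 4 * \<omega>)) * q / 8 = 3 * (\<omega> * \<gamma>) / 8 * ((1 - L * (\<gamma> + 4 * \<omega>)) * q)"
      by (rule gen)
    also have "\<dots> = 3 * (\<omega> * \<gamma>) / 8 * (1 - 4 * z)" unfolding kq ..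
    also have "\<dots> = 3 * (\<omega> * \<gamma>) / 8 - (3/2) * ((\<omega> * \<gamma>) * z)" by (simp add: right_diff_distrib)
    finally show ?thesis .
  qed
  moreover have "ca = 3 * (\<omega> * \<gamma>) / 8 - (\<omega> * \<gamma>) * (4 * z\<^sup>2)"
    unfolding ca_q z_def by (simp add: power_mult_distrib algebra_simps)
  ultimately show ?thesis by linarith
qed

lemma kappa_pos: "0 < 1 - L * (\<gamma> + 4 * \<omega>)"
  using lam_hi unfolding \<beta>_def lam_def by (simp add: algebra_simps)

lemma ca_pos: "0 < ca"
proof -
  have "0 < 3 * \<omega> * \<gamma> * (1 - L * (\<gamma> + 4 * \<omega>)) * q / 8"
    using omega_pos gamma_pos kappa_pos q_facts by simp
  thus ?thesis using ca_lower by linarith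
qed

lemma onestep_nonneg: "0 \<le> (1 + eps) * Phi (x, xh) + eta - ca * (norm (F xh))\<^sup>2"
proof -
  have v: "0 \<le> (\<delta> * (norm (xh - xstar))\<^sup>2 + 2 * \<sigma>2) / real \<tau>"
    using delta_nonneg sigma2_nonneg tau_pos by simp
  have "0 \<le> A * (L\<^sup>2 / th2)" using A_pos th2_bounds by simp
  hence h2: "0 \<le> A * (L\<^sup>2 / th2) * (norm (\<gamma> *\<^sub>R (F xh - (1 / \<gamma>) *\<^sub>R (x - xh)) + \<omega> *\<^sub>R F xh))\<^sup>2"
    by (rule mult_nonneg_nonneg) simp
  have h1: "0 \<le> (norm ((x - xstar) - \<omega> *\<^sub>R F xh))\<^sup>2" by simp
  have h3: "(\<omega>\<^sup>2 + A * (L\<^sup>2 / th2) * (\<gamma> + \<omega>)\<^sup>2 + A * (1 / (1 - th2))) * 0 = 0" by simp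
  have "0 \<le> (norm ((x - xstar) - \<omega> *\<^sub>R F xh))\<^sup>2
     + A * (L\<^sup>2 / th2) * (norm (\<gamma> *\<^sub>R (F xh - (1 / \<gamma>) *\<^sub>R (x - xh)) + \<omega> *\<^sub>R F xh))\<^sup>2
     + (\<omega>\<^sup>2 + A * (L\<^sup>2 / th2) * (\<gamma> + \<omega>)\<^sup>2 + A * (1 / (1 - th2))) * 0" using h1 h2 h3 by linarith
  also have "\<dots> \<le> (1 + eps) * Phi (x, xh) + eta - ca * (norm (F xh))\<^sup>2"
    by (rule onestep_real[OF order_refl v])
  finally show ?thesis .
qed

definition "Eph k = (\<integral>\<^sup>+s. ennreal (Phi (speg Fs \<tau> \<gamma> \<omega> x0 s k)) \<partial>Om)"
definition "Ea k = (\<integral>\<^sup>+s. ennreal ((norm (F (snd (speg Fs \<tau> \<gamma> \<omega> x0 s k))))\<^sup>2) \<partial>Om)"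

lemma speg_meas_Om: "(\<lambda>s. speg Fs \<tau> \<gamma> \<omega> x0 s k) \<in> borel_measurable Om"
  by (rule meas_speg_pair) simp

lemma step_E: "Eph (Suc k) + ennreal ca * Ea k \<le> ennreal (1 + eps) * Eph k + ennreal eta"
proof -
  interpret Dp: prob_space D by (rule D_prob)
  interpret pp: product_prob_space "\<lambda>_. D" "UNIV :: (nat \<times> nat) set" by unfold_locales
  let ?Bd = "\<lambda>st. ennreal ((1 + eps) * Phi st + eta - ca * (norm (F (snd st)))\<^sup>2)"
  let ?sp = "\<lambda>s. speg Fs \<tau> \<gamma> \<omega> x0 s k"
  let ?f = "\<lambda>s. ennreal ((norm (F (snd (?sp s))))\<^sup>2)"
  let ?g = "\<lambda>s. ennreal (Phi (?sp s))"
  have B: "\<And>st. (\<integral>\<^sup>+y. ennreal (Phi (nextst \<gamma> \<omega> st (minibatch Fs \<tau> y (Suc k) (snd st)))) \<partial>(PiM (Pair (Suc k) ` {..<\<tau>}) (\<lambda>_. D))) \<le> ?Bd st"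
  proof -
    fix st :: "(real^'d) \<times> (real^'d)"
    obtain x xh where st: "st = (x, xh)" by (cases st)
    show "?thesis st" unfolding st snd_conv using onestep[where x=x and xh=xh and m="Suc k"] .
  qed
  have s1: "Eph (Suc k) \<le> (\<integral>\<^sup>+s. ?Bd (?sp s) \<partial>Om)"
    unfolding Eph_def by (rule step_Om[OF Phi_meas Bd_meas B])
  have m1: "(\<lambda>s. ?Bd (?sp s)) \<in> borel_measurable Om"
    using measurable_comp[OF speg_meas_Om Bd_meas] by (simp add: comp_def)
  have m2: "?f \<in> borel_measurable Om"
    using measurable_comp[OF speg_meas_Om Fa_meas] by (simp add: comp_def)
  have m3: "?g \<in> borel_measurable Om"
    using measurable_comp[OF speg_meas_Om Phi_meas] by (simp add: comp_def)
  have m2': "(\<lambda>s. ennreal ca * ?f s) \<in> borel_measurable Om"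
    by (rule borel_measurable_times_ennreal[OF borel_measurable_const m2])
  have m3': "(\<lambda>s. ennreal (1 + eps) * ?g s) \<in> borel_measurable Om"
    by (rule borel_measurable_times_ennreal[OF borel_measurable_const m3])
  have pw: "?Bd (?sp s) + ennreal ca * ?f s = ennreal (1 + eps) * ?g s + ennreal eta" for s
  proof -
    obtain x xh where st: "?sp s = (x, xh)" by (cases "?sp s")
    have nn: "0 \<le> (1 + eps) * Phi (x, xh) + eta - ca * (norm (F xh))\<^sup>2" by (rule onestep_nonneg)
    have e1: "ennreal ca * ennreal ((norm (F xh))\<^sup>2) = ennreal (ca * (norm (F xh))\<^sup>2)"
      using ca_pos by (intro ennreal_mult[symmetric]) auto
    have "?Bd (?sp s) + ennreal ca * ?f s
        = ennreal ((1 + eps) * Phi (x, xh) + eta - ca * (norm (F xh))\<^sup>2) + ennreal (ca * (norm (F xh))\<^sup>2)"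
      unfolding st snd_conv e1 ..
    also have "\<dots> = ennreal ((1 + eps) * Phi (x, xh) + eta - ca * (norm (F xh))\<^sup>2 + ca * (norm (F xh))\<^sup>2)"
      using nn ca_pos by (intro ennreal_plus[symmetric]) auto
    also have "\<dots> = ennreal ((1 + eps) * Phi (x, xh) + eta)" by (simp only: diff_add_cancel)
    also have "\<dots> = ennreal ((1 + eps) * Phi (x, xh)) + ennreal eta"
      using eps_nonneg eta_nonneg Phi_nonneg[of "(x, xh)"] by (intro ennreal_plus) auto
    also have "ennreal ((1 + eps) * Phi (x, xh)) = ennreal (1 + eps) * ennreal (Phi (x, xh))"
      using eps_nonneg Phi_nonneg[of "(x, xh)"] by (intro ennreal_mult) auto
    finally show ?thesis unfolding st .
  qed
  have "(\<integral>\<^sup>+s. ?Bd (?sp s) \<partial>Om) + ennreal ca * Ea k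
      = (\<integral>\<^sup>+s. ?Bd (?sp s) \<partial>Om) + (\<integral>\<^sup>+s. ennreal ca * ?f s \<partial>Om)"
    unfolding Ea_def by (simp only: nn_integral_cmult[OF m2])
  also have "\<dots> = (\<integral>\<^sup>+s. ?Bd (?sp s) + ennreal ca * ?f s \<partial>Om)"
    by (rule nn_integral_add[OF m1 m2', symmetric])
  also have "\<dots> = (\<integral>\<^sup>+s. ennreal (1 + eps) * ?g s + ennreal eta \<partial>Om)"
    by (simp only: pw)
  also have "\<dots> = (\<integral>\<^sup>+s. ennreal (1 + eps) * ?g s \<partial>Om) + (\<integral>\<^sup>+s. ennreal eta \<partial>Om)"
    by (rule nn_integral_add[OF m3' borel_measurable_const])
  also have "\<dots> = ennreal (1 + eps) * Eph k + ennreal eta"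
    unfolding Eph_def nn_integral_cmult[OF m3] nn_integral_const pp.emeasure_space_1 by simp
  finally have eq: "(\<integral>\<^sup>+s. ?Bd (?sp s) \<partial>Om) + ennreal ca * Ea k = ennreal (1 + eps) * Eph k + ennreal eta" .
  have "Eph (Suc k) + ennreal ca * Ea k \<le> (\<integral>\<^sup>+s. ?Bd (?sp s) \<partial>Om) + ennreal ca * Ea k"
    by (rule add_right_mono[OF s1])
  thus ?thesis unfolding eq .
qed

end

lemma nn3c:
  assumes "prob_space M" "f1 \<in> borel_measurable M" "f2 \<in> borel_measurable M"
  shows "(\<integral>\<^sup>+y. ennreal c0 + C1 * f1 y + C2 * f2 y \<partial>M) = ennreal c0 + C1 * (\<integral>\<^sup>+y. f1 y \<partial>M) + C2 * (\<integral>\<^sup>+y. f2 y \<partial>M)"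
proof -
  interpret prob_space M by fact
  have "(\<integral>\<^sup>+y. ennreal c0 + C1 * f1 y + C2 * f2 y \<partial>M) = (\<integral>\<^sup>+y. ennreal c0 \<partial>M) + C1 * (\<integral>\<^sup>+y. f1 y \<partial>M) + C2 * (\<integral>\<^sup>+y. f2 y \<partial>M)"
    by (rule nn3) (use assms in auto)
  thus ?thesis by (simp add: emeasure_space_1)
qed

context mainloc begin

lemma init_pt:
  fixes g :: "real^'d"
  shows "Phi (x0, x0 - \<gamma> *\<^sub>R g) \<le> R2 + A * (2 * \<beta>\<^sup>2 * (norm (F x0 + 1 *\<^sub>R (g - F x0)))\<^sup>2 + 2 * (norm (0 + 1 *\<^sub>R (g - F x0)))\<^sup>2)"
proof -
  have gnz: "\<gamma> \<noteq> 0" using gamma_pos by simp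
  have e: "(1 / \<gamma>) *\<^sub>R (x0 - (x0 - \<gamma> *\<^sub>R g)) = g" using gnz by simp
  have lipD: "norm (F (x0 - \<gamma> *\<^sub>R g) - F x0) \<le> L * norm ((x0 - \<gamma> *\<^sub>R g) - x0)"
    using lipschitz_onD[OF lip UNIV_I UNIV_I, of "x0 - \<gamma> *\<^sub>R g" x0] unfolding dist_norm .
  also have "\<dots> = \<beta> * norm g" unfolding \<beta>_def using gamma_pos L_pos by simp
  finally have l2: "(norm (F (x0 - \<gamma> *\<^sub>R g) - F x0))\<^sup>2 \<le> \<beta>\<^sup>2 * (norm g)\<^sup>2"
    by (metis norm_ge_zero power_mono power_mult_distrib)
  have "F (x0 - \<gamma> *\<^sub>R g) - g = (F (x0 - \<gamma> *\<^sub>R g) - F x0) + (- (g - F x0))" by simp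
  hence "(norm (F (x0 - \<gamma> *\<^sub>R g) - g))\<^sup>2 \<le> (norm (F (x0 - \<gamma> *\<^sub>R g) - F x0))\<^sup>2 / (1/2) + (norm (- (g - F x0)))\<^sup>2 / (1 - 1/2)"
    using young_norm[of "1/2" "F (x0 - \<gamma> *\<^sub>R g) - F x0" "- (g - F x0)"] by simp
  also have "\<dots> \<le> 2 * \<beta>\<^sup>2 * (norm (F x0 + 1 *\<^sub>R (g - F x0)))\<^sup>2 + 2 * (norm (0 + 1 *\<^sub>R (g - F x0)))\<^sup>2"
    using l2 by (simp add: norm_minus_commute)
  finally have h: "(norm (F (x0 - \<gamma> *\<^sub>R g) - g))\<^sup>2 \<le> 2 * \<beta>\<^sup>2 * (norm (F x0 + 1 *\<^sub>R (g - F x0)))\<^sup>2 + 2 * (norm (0 + 1 *\<^sub>R (g - F x0)))\<^sup>2" .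
  have "Phi (x0, x0 - \<gamma> *\<^sub>R g) = R2 + A * (norm (F (x0 - \<gamma> *\<^sub>R g) - g))\<^sup>2"
    unfolding Phi_def R2_def fst_conv snd_conv e ..
  also have "\<dots> \<le> R2 + A * (2 * \<beta>\<^sup>2 * (norm (F x0 + 1 *\<^sub>R (g - F x0)))\<^sup>2 + 2 * (norm (0 + 1 *\<^sub>R (g - F x0)))\<^sup>2)"
    using h A_pos by (intro add_left_mono mult_left_mono) auto
  finally show ?thesis .
qed

lemma init_real:
  fixes Fx V0 :: real
  assumes Fx: "0 \<le> Fx" "Fx \<le> L\<^sup>2 * R2" and V0: "0 \<le> V0" "V0 \<le> (\<delta> * R2 + 2 * \<sigma>2) / real \<tau>"
  shows "R2 + A * (2 * \<beta>\<^sup>2 * (Fx + 1\<^sup>2 * V0) + 2 * (0\<^sup>2 + 1\<^sup>2 * V0)) \<le> 11 * R2"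
proof -
  have b: "0 \<le> \<beta>" "\<beta> \<le> 1" using beta_lo beta_hi by auto
  have b2: "\<beta>\<^sup>2 \<le> 1" using b by (simp add: power_le_one)
  have b3: "\<beta> ^ 3 \<le> 1" using b by (simp add: power_le_one)
  have Ap: "0 \<le> A" using A_pos by simp
  have R2p: "0 \<le> R2" using R2_pos by simp
  have eq: "A * (2 * \<beta>\<^sup>2 * (Fx + 1\<^sup>2 * V0) + 2 * (0\<^sup>2 + 1\<^sup>2 * V0)) = A * (2 * \<beta>\<^sup>2) * Fx + A * (2 * \<beta>\<^sup>2 + 2) * V0"
    by (simp add: algebra_simps)
  have f3: "A * (2 * \<beta>\<^sup>2) * Fx \<le> R2"
  proof -
    have "A * (2 * \<beta>\<^sup>2) * Fx \<le> A * (2 * \<beta>\<^sup>2) * (L\<^sup>2 * R2)"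
      using Fx Ap by (intro mult_left_mono) auto
    also have "\<dots> = 4 * (lam * q) * \<beta> ^ 3 * R2"
      unfolding A_q lam_def \<beta>_def by (simp add: power2_eq_square power3_eq_cube algebra_simps)
    also have "\<dots> \<le> 4 * (1/4) * 1 * R2"
      using lam_q lam_pos q_facts b3 R2p b by (intro mult_right_mono mult_mono) auto
    finally show ?thesis by simp
  qed
  have "A * (2 * \<beta>\<^sup>2 + 2) \<le> A * 4" using b2 Ap by (intro mult_left_mono) auto
  hence "A * (2 * \<beta>\<^sup>2 + 2) \<le> 4 * A" by (simp add: mult.commute)
  hence f4: "A * (2 * \<beta>\<^sup>2 + 2) * V0 \<le> (4 * A) * V0"
    using V0 by (intro mult_right_mono) auto
  have f5: "(4 * A) * V0 \<le> (4 * A) * (\<delta> * R2 / real \<tau>) + (4 * A) * (2 * \<sigma>2 / real \<tau>)"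
  proof -
    have "(4 * A) * V0 \<le> (4 * A) * ((\<delta> * R2 + 2 * \<sigma>2) / real \<tau>)" using V0 Ap by (intro mult_left_mono) auto
    thus ?thesis by (simp add: add_divide_distrib distrib_left)
  qed
  have f6: "(4 * A) * (\<delta> * R2 / real \<tau>) \<le> R2"
  proof -
    have "(4 * A) * (\<delta> * R2 / real \<tau>) = (4 * A) * (\<delta> / real \<tau>) * R2" by simp
    also have "\<dots> \<le> (4 * A) * ((1 - \<beta>) * L\<^sup>2 * lam / 32) * R2"
      using delta_tau1 Ap R2p by (intro mult_right_mono mult_left_mono) auto
    also have "\<dots> = ((1 - \<beta>) * q) * (\<beta> * lam\<^sup>2 / 4) * R2"
      unfolding A_q lam_def \<beta>_def by (simp add: power2_eq_square field_simps)
    also have "\<dots> = (\<beta> * lam\<^sup>2 / 4) * R2" unfolding q_facts(1) by simp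
    also have "\<dots> \<le> 1 * R2"
    proof (intro mult_right_mono R2p)
      have "lam\<^sup>2 \<le> 1" using lam_hi lam_pos beta_lo by (simp add: power_le_one)
      hence "\<beta> * lam\<^sup>2 \<le> 1 * 1" using b by (intro mult_mono) auto
      thus "\<beta> * lam\<^sup>2 / 4 \<le> 1" by simp
    qed
    finally show ?thesis by simp
  qed
  have f7: "(4 * A) * (2 * \<sigma>2 / real \<tau>) \<le> 8 * R2"
  proof -
    have Km: "1 \<le> real K - 1" using K_ge by simp
    have st: "\<sigma>2 / real \<tau> \<le> \<sigma>2 * (real K - 1) / real \<tau>"
      using Km sigma2_nonneg tau_pos by (simp add: divide_right_mono mult_le_cancel_left1)
    also have "\<dots> \<le> (1 - \<beta>) * R2 / (2 * \<omega> * \<gamma>)" by (rule sigma_tau)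
    finally have st2: "\<sigma>2 / real \<tau> \<le> (1 - \<beta>) * R2 / (2 * \<omega> * \<gamma>)" .
    have "(4 * A) * (2 * \<sigma>2 / real \<tau>) = (8 * A) * (\<sigma>2 / real \<tau>)" by simp
    also have "\<dots> \<le> (8 * A) * ((1 - \<beta>) * R2 / (2 * \<omega> * \<gamma>))"
      using st2 Ap by (intro mult_left_mono) auto
    also have "\<dots> = 8 * ((1 - \<beta>) * q) * R2"
      unfolding A_q using omega_pos gamma_pos by (simp add: field_simps)
    also have "\<dots> = 8 * R2" unfolding q_facts(1) by simp
    finally show ?thesis .
  qed
  show ?thesis unfolding eq using f3 f4 f5 f6 f7 by linarith
qed

lemma init_E: "Eph 0 \<le> ennreal (11 * R2)"
proof -
  let ?W = "PiM (Pair 0 ` {..<\<tau>}) (\<lambda>_. D)"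
  let ?e = "\<lambda>y. minibatch Fs \<tau> y 0 x0 - F x0"
  interpret Wp: prob_space ?W by (rule prob_space_PiM) (use D_prob in auto)
  have m: "\<And>c k. (\<lambda>y. ennreal ((norm (c + k *\<^sub>R ?e y))\<^sup>2)) \<in> borel_measurable ?W"
    using meas_e by measurable
  have Fx: "(norm (F x0))\<^sup>2 \<le> L\<^sup>2 * R2"
  proof -
    have "norm (F x0 - F xstar) \<le> L * norm (x0 - xstar)"
      using lipschitz_onD[OF lip] by (simp add: dist_norm)
    hence "norm (F x0) \<le> L * norm (x0 - xstar)" using root by simp
    hence "(norm (F x0))\<^sup>2 \<le> (L * norm (x0 - xstar))\<^sup>2" by (intro power_mono) auto
    thus ?thesis unfolding R2_def by (simp add: power_mult_distrib)
  qed
  define V0 where "V0 = VX x0 / real \<tau>"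
  have V0: "0 \<le> V0" "V0 \<le> (\<delta> * R2 + 2 * \<sigma>2) / real \<tau>"
    unfolding V0_def R2_def using VX_nonneg VX_le[of x0] tau_pos by (auto simp: divide_right_mono)
  have "Eph 0 = (\<integral>\<^sup>+x. ennreal (Phi (speg Fs \<tau> \<gamma> \<omega> x0 x 0)) \<partial>?W)"
    unfolding Eph_def using E_speg[OF Phi_meas, of \<tau> \<gamma> \<omega> x0 0] by (simp add: Jk_0)
  also have "\<dots> \<le> (\<integral>\<^sup>+y. ennreal R2 + ennreal (A * (2 * \<beta>\<^sup>2)) * ennreal ((norm (F x0 + 1 *\<^sub>R ?e y))\<^sup>2)
        + ennreal (A * 2) * ennreal ((norm (0 + 1 *\<^sub>R ?e y))\<^sup>2) \<partial>?W)"
  proof (rule nn_integral_mono)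
    fix y
    have "Phi (speg Fs \<tau> \<gamma> \<omega> x0 y 0) = Phi (x0, x0 - \<gamma> *\<^sub>R minibatch Fs \<tau> y 0 x0)" by simp
    also have "\<dots> \<le> R2 + A * (2 * \<beta>\<^sup>2 * (norm (F x0 + 1 *\<^sub>R ?e y))\<^sup>2 + 2 * (norm (0 + 1 *\<^sub>R ?e y))\<^sup>2)"
      by (rule init_pt)
    also have "\<dots> = R2 + (A * (2 * \<beta>\<^sup>2)) * (norm (F x0 + 1 *\<^sub>R ?e y))\<^sup>2 + (A * 2) * (norm (0 + 1 *\<^sub>R ?e y))\<^sup>2"
      by (simp add: algebra_simps)
    finally have r: "Phi (speg Fs \<tau> \<gamma> \<omega> x0 y 0) \<le> R2 + (A * (2 * \<beta>\<^sup>2)) * (norm (F x0 + 1 *\<^sub>R ?e y))\<^sup>2 + (A * 2) * (norm (0 + 1 *\<^sub>R ?e y))\<^sup>2" .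
    have "ennreal (Phi (speg Fs \<tau> \<gamma> \<omega> x0 y 0)) \<le> ennreal (R2 + (A * (2 * \<beta>\<^sup>2)) * (norm (F x0 + 1 *\<^sub>R ?e y))\<^sup>2 + (A * 2) * (norm (0 + 1 *\<^sub>R ?e y))\<^sup>2)"
      using r by (rule ennreal_leI)
    also have "\<dots> = ennreal R2 + ennreal (A * (2 * \<beta>\<^sup>2)) * ennreal ((norm (F x0 + 1 *\<^sub>R ?e y))\<^sup>2)
        + ennreal (A * 2) * ennreal ((norm (0 + 1 *\<^sub>R ?e y))\<^sup>2)"
      using A_pos R2_pos by (intro ennreal3[symmetric]) auto
    finally show "ennreal (Phi (speg Fs \<tau> \<gamma> \<omega> x0 y 0)) \<le> ennreal R2 + ennreal (A * (2 * \<beta>\<^sup>2)) * ennreal ((norm (F x0 + 1 *\<^sub>R ?e y))\<^sup>2)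
        + ennreal (A * 2) * ennreal ((norm (0 + 1 *\<^sub>R ?e y))\<^sup>2)" .
  qed
  also have "\<dots> = ennreal R2 + ennreal (A * (2 * \<beta>\<^sup>2)) * (\<integral>\<^sup>+y. ennreal ((norm (F x0 + 1 *\<^sub>R ?e y))\<^sup>2) \<partial>?W)
        + ennreal (A * 2) * (\<integral>\<^sup>+y. ennreal ((norm (0 + 1 *\<^sub>R ?e y))\<^sup>2) \<partial>?W)"
    by (rule nn3c[OF Wp.prob_space_axioms m m])
  also have "\<dots> = ennreal R2 + ennreal (A * (2 * \<beta>\<^sup>2)) * ennreal ((norm (F x0))\<^sup>2 + 1\<^sup>2 * V0)
        + ennreal (A * 2) * ennreal ((norm (0::real^'d))\<^sup>2 + 1\<^sup>2 * V0)"
    unfolding V0_def by (simp only: block[OF tau_pos])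
  also have "\<dots> = ennreal (R2 + A * (2 * \<beta>\<^sup>2) * ((norm (F x0))\<^sup>2 + 1\<^sup>2 * V0) + A * 2 * ((norm (0::real^'d))\<^sup>2 + 1\<^sup>2 * V0))"
    using A_pos R2_pos V0 by (intro ennreal3) auto
  also have "\<dots> \<le> ennreal (11 * R2)"
  proof (rule ennreal_leI)
    have "R2 + A * (2 * \<beta>\<^sup>2 * ((norm (F x0))\<^sup>2 + 1\<^sup>2 * V0) + 2 * (0\<^sup>2 + 1\<^sup>2 * V0)) \<le> 11 * R2"
      using init_real[OF _ Fx V0] by simp
    thus "R2 + A * (2 * \<beta>\<^sup>2) * ((norm (F x0))\<^sup>2 + 1\<^sup>2 * V0) + A * 2 * ((norm (0::real^'d))\<^sup>2 + 1\<^sup>2 * V0) \<le> 11 * R2"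
      by (simp add: algebra_simps)
  qed
  finally show ?thesis .
qed

end

context mainloc begin

definition "Bc = (24/17) * (11 + 7 * q) * R2"

lemma Bc_nonneg: "0 \<le> Bc" unfolding Bc_def using q_facts R2_pos by simp

lemma N_nonneg: "0 \<le> N" unfolding N_q using omega_pos gamma_pos by simp

lemma epsK: "eps * (real K - 1) \<le> 7/24"
proof -
  have "eps * (real K - 1) = 2 * N * (\<delta> * (real K - 1) / real \<tau>)" unfolding eps_def by simp
  also have "\<dots> \<le> 2 * N * ((1 - \<beta>)\<^sup>2 / (48 * \<omega> * \<gamma>))"
    using delta_tau2 N_nonneg by (intro mult_left_mono) auto
  also have "\<dots> = (14 / 48) * ((1 - \<beta>) * q)\<^sup>2"
    unfolding N_q using omega_pos gamma_pos by (simp add: field_simps power2_eq_square)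
  also have "\<dots> = 7/24" unfolding q_facts(1) by simp
  finally show ?thesis .
qed

lemma etaK: "eta * (real K - 1) \<le> 7 * q * R2"
proof -
  have "eta * (real K - 1) = 2 * N * (\<sigma>2 * (real K - 1) / real \<tau>)" unfolding eta_def by simp
  also have "\<dots> \<le> 2 * N * ((1 - \<beta>) * R2 / (2 * \<omega> * \<gamma>))"
    using sigma_tau N_nonneg by (intro mult_left_mono) auto
  also have "\<dots> = 7 * q * ((1 - \<beta>) * q) * R2"
    unfolding N_q using omega_pos gamma_pos by (simp add: field_simps power2_eq_square)
  also have "\<dots> = 7 * q * R2" unfolding q_facts(1) by simp
  finally show ?thesis .
qed

lemma Bc_fix: "11 * R2 + (real K - 1) * (eps * Bc + eta) \<le> Bc"
proof -
  have "(real K - 1) * (eps * Bc + eta) = (eps * (real K - 1)) * Bc + eta * (real K - 1)"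
    by (simp add: algebra_simps)
  also have "\<dots> \<le> (7/24) * Bc + 7 * q * R2"
    using epsK etaK Bc_nonneg by (intro add_mono mult_right_mono) auto
  finally have "(real K - 1) * (eps * Bc + eta) \<le> (7/24) * Bc + 7 * q * R2" .
  moreover have "11 * R2 + 7 * q * R2 = (17/24) * Bc" unfolding Bc_def by (simp add: algebra_simps)
  ultimately show ?thesis by linarith
qed

lemma accum: "k \<le> K - 1 \<Longrightarrow> Eph k + ennreal ca * (\<Sum>j<k. Ea j) \<le> ennreal (11 * R2 + real k * (eps * Bc + eta))"
proof (induction k)
  case 0
  then show ?case using init_E by simp
next
  case (Suc k)
  have kK: "k \<le> K - 1" using Suc.prems by simp
  have IH: "Eph k + ennreal ca * (\<Sum>j<k. Ea j) \<le> ennreal (11 * R2 + real k * (eps * Bc + eta))"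
    using Suc.IH kK by simp
  define S where "S = 11 * R2 + real k * (eps * Bc + eta)"
  have en: "0 \<le> eps * Bc + eta" using eps_nonneg eta_nonneg Bc_nonneg by simp
  have S0: "0 \<le> S" unfolding S_def using en R2_pos by simp
  have SB: "S \<le> Bc"
  proof -
    have "real k \<le> real K - 1" using kK K_ge by linarith
    hence "real k * (eps * Bc + eta) \<le> (real K - 1) * (eps * Bc + eta)" using en by (rule mult_right_mono)
    thus ?thesis unfolding S_def using Bc_fix by linarith
  qed
  have Ek: "Eph k \<le> ennreal S"
    using IH unfolding S_def[symmetric] by (rule order_trans[rotated]) (simp add: add_increasing2)
  have "Eph (Suc k) + ennreal ca * (\<Sum>j<Suc k. Ea j) = (Eph (Suc k) + ennreal ca * Ea k) + ennreal ca * (\<Sum>j<k. Ea j)"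
    by (simp add: distrib_left add_ac)
  also have "\<dots> \<le> (ennreal (1 + eps) * Eph k + ennreal eta) + ennreal ca * (\<Sum>j<k. Ea j)"
    by (intro add_right_mono step_E)
  also have "ennreal (1 + eps) * Eph k = Eph k + ennreal eps * Eph k"
    using eps_nonneg by (simp add: ennreal_plus distrib_right)
  also have "(Eph k + ennreal eps * Eph k + ennreal eta) + ennreal ca * (\<Sum>j<k. Ea j)
      = (Eph k + ennreal ca * (\<Sum>j<k. Ea j)) + ennreal eps * Eph k + ennreal eta"
    by (simp add: add_ac)
  also have "\<dots> \<le> ennreal S + ennreal eps * ennreal Bc + ennreal eta"
  proof (intro add_mono order_refl)
    show "Eph k + ennreal ca * (\<Sum>j<k. Ea j) \<le> ennreal S" using IH unfolding S_def .
    have "ennreal S \<le> ennreal Bc" using SB by (rule ennreal_leI)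
    thus "ennreal eps * Eph k \<le> ennreal eps * ennreal Bc"
      using Ek by (intro mult_left_mono) auto
  qed
  also have "\<dots> = ennreal (S + eps * Bc + eta)"
    using S0 eps_nonneg Bc_nonneg eta_nonneg by (simp add: ennreal_plus ennreal_mult)
  also have "S + eps * Bc + eta = 11 * R2 + real (Suc k) * (eps * Bc + eta)"
    unfolding S_def by (simp add: algebra_simps)
  finally show ?case .
qed

lemma final_bound: "Min (Ea ` {..K - 1}) \<le> ennreal ((48 / (\<omega> * \<gamma> * (1 - L * (\<gamma> + 4 * \<omega>)))) * R2 / (real K - 1))"
proof -
  define M where "M = Min (Ea ` {..K - 1})"
  have Kr: "real (K - 1) = real K - 1" using K_ge by simp
  have K1: "0 < real K - 1" using K_ge by simp
  have acc: "Eph (K - 1) + ennreal ca * (\<Sum>j<K - 1. Ea j) \<le> ennreal (11 * R2 + (real K - 1) * (eps * Bc + eta))"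
    using accum[of "K - 1"] unfolding Kr by simp
  have "ennreal ca * (\<Sum>j<K - 1. Ea j) \<le> ennreal Bc"
  proof -
    have "ennreal ca * (\<Sum>j<K - 1. Ea j) \<le> Eph (K - 1) + ennreal ca * (\<Sum>j<K - 1. Ea j)"
      by (simp add: add_increasing)
    also have "\<dots> \<le> ennreal (11 * R2 + (real K - 1) * (eps * Bc + eta))" by (rule acc)
    also have "\<dots> \<le> ennreal Bc" using Bc_fix by (rule ennreal_leI)
    finally show ?thesis .
  qed
  moreover have "(\<Sum>j<K - 1. M) \<le> (\<Sum>j<K - 1. Ea j)"
    unfolding M_def by (intro sum_mono Min_le) auto
  moreover have "(\<Sum>j<K - 1. M) = of_nat (K - 1) * M" by simp
  ultimately have key: "ennreal ca * (of_nat (K - 1) * M) \<le> ennreal Bc"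
    by (metis mult_left_mono order_trans zero_le)
  have "M \<le> ennreal ((48 / (\<omega> * \<gamma> * (1 - L * (\<gamma> + 4 * \<omega>)))) * R2 / (real K - 1))"
  proof (cases M)
    case top
    have "of_nat (K - 1) * M = (\<top> :: ennreal)" using top K_ge by (simp add: ennreal_mult_eq_top_iff)
    hence "ennreal ca * (of_nat (K - 1) * M) = \<top>" using ca_pos by (simp add: ennreal_mult_eq_top_iff)
    hence "\<top> \<le> ennreal Bc" using key by simp
    hence False by (simp add: top_unique)
    thus ?thesis by (rule FalseE)
  next
    case (real m)
    have mM: "M = ennreal m" and m0: "0 \<le> m" using real by auto
    have o: "(of_nat (K - 1) :: ennreal) = ennreal (real K - 1)"
      unfolding ennreal_of_nat_eq_real_of_nat Kr ..
    have e1: "ennreal (real K - 1) * ennreal m = ennreal ((real K - 1) * m)"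
      using K1 m0 by (intro ennreal_mult[symmetric]) auto
    have e2: "ennreal ca * ennreal ((real K - 1) * m) = ennreal (ca * ((real K - 1) * m))"
      using ca_pos K1 m0 by (intro ennreal_mult[symmetric]) auto
    have "ennreal ca * (of_nat (K - 1) * M) = ennreal (ca * ((real K - 1) * m))"
      unfolding mM o e1 e2 ..
    hence le: "ca * ((real K - 1) * m) \<le> Bc" using key Bc_nonneg by (simp add: ennreal_le_iff)
    define c' where "c' = 3 * \<omega> * \<gamma> * (1 - L * (\<gamma> + 4 * \<omega>)) * q / 8"
    have c'p: "0 < c'" unfolding c'_def using omega_pos gamma_pos kappa_pos q_facts by simp
    have "c' * ((real K - 1) * m) \<le> ca * ((real K - 1) * m)"
      using ca_lower K1 m0 unfolding c'_def by (intro mult_right_mono) auto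
    also have "\<dots> \<le> Bc" by (rule le)
    also have "Bc \<le> 18 * q * R2"
    proof -
      have "(24/17) * (11 + 7 * q) \<le> 18 * q" using q_facts by simp
      thus ?thesis unfolding Bc_def using R2_pos by (intro mult_right_mono) auto
    qed
    finally have "(real K - 1) * m \<le> 18 * q * R2 / c'" using c'p by (simp add: pos_le_divide_eq mult.commute)
    also have "18 * q * R2 / c' = 48 / (\<omega> * \<gamma> * (1 - L * (\<gamma> + 4 * \<omega>))) * R2"
    proof -
      have gen: "\<And>a b k q R :: real. a \<noteq> 0 \<Longrightarrow> b \<noteq> 0 \<Longrightarrow> k \<noteq> 0 \<Longrightarrow> q \<noteq> 0 \<Longrightarrow>
          18 * q * R / (3 * a * b * k * q / 8) = 48 / (a * b * k) * R"
        by (simp add: field_simps)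
      show ?thesis unfolding c'_def
        by (rule gen) (use omega_pos gamma_pos kappa_pos q_facts in auto)
    qed
    finally have mk: "(real K - 1) * m \<le> 48 / (\<omega> * \<gamma> * (1 - L * (\<gamma> + 4 * \<omega>))) * R2" .
    have gen: "\<And>m c X :: real. 0 < c \<Longrightarrow> c * m \<le> X \<Longrightarrow> m \<le> X / c"
      by (simp add: pos_le_divide_eq mult.commute)
    have "m \<le> 48 / (\<omega> * \<gamma> * (1 - L * (\<gamma> + 4 * \<omega>))) * R2 / (real K - 1)"
      by (rule gen[OF K1 mk])
    thus ?thesis unfolding mM by (rule ennreal_leI)
  qed
  thus ?thesis unfolding M_def .
qed

end

theorem theorem4p5:
  fixes Fs :: "'n::finite \<Rightarrow> real^'d \<Rightarrow> real^'d"
    and xstar x0 :: "real^'d" and D :: "(real^'n) measure"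
    and L \<rho> \<delta> \<gamma> \<omega> :: real and K \<tau> :: nat
  assumes meas: "\<forall>i. Fs i \<in> borel_measurable borel"
    and root: "Fbar Fs xstar = 0"
    and lip: "L-lipschitz_on UNIV (Fbar Fs)"
    and minty: "\<forall>x. inner (Fbar Fs x) (x - xstar) \<ge> - \<rho> * (norm (Fbar Fs x))\<^sup>2"
    and rho_pos: "0 < \<rho>" and rho_lt: "\<rho> < 1 / (2 * L)"
    and D_prob: "prob_space D" and D_sets: "sets D = sets borel"
    and D_nonneg: "AE v in D. \<forall>i. 0 \<le> v $ i"
    and D_mean: "\<forall>i. integrable D (\<lambda>v. v $ i) \<and> (\<integral>v. v $ i \<partial>D) = 1"
    and delta_pos: "0 < \<delta>"
    and ER: "\<forall>x. (\<integral>\<^sup>+v. ennreal ((norm ((Fv Fs v x - Fv Fs v xstar) - (Fbar Fs x - Fbar Fs xstar)))\<^sup>2) \<partial>D)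
                 \<le> ennreal (\<delta> / 2 * (norm (x - xstar))\<^sup>2)"
    and sigma_fin: "integrable D (\<lambda>v. (norm (Fv Fs v xstar))\<^sup>2)"
    and gamma_lo: "max (2 * \<rho>) (1 / (2 * L)) < \<gamma>" and gamma_hi: "\<gamma> < 1 / L"
    and omega_pos: "0 < \<omega>" and omega_hi: "\<omega> < min (\<gamma> - 2 * \<rho>) (1 / (4 * L) - \<gamma> / 4)"
    and x0_ne: "x0 \<noteq> xstar"
    and K_ge: "2 \<le> K"
    and tau_ge: "real \<tau> \<ge> max 1 (max (32 * \<delta> / ((1 - L * \<gamma>) * L ^ 3 * \<omega>))
                  (max (48 * \<omega> * \<gamma> * \<delta> * (real K - 1) / (1 - L * \<gamma>)\<^sup>2)
                       (2 * \<omega> * \<gamma> * (\<integral>v. (norm (Fv Fs v xstar))\<^sup>2 \<partial>D) * (real K - 1)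
                          / ((1 - L * \<gamma>) * (norm (x0 - xstar))\<^sup>2))))"
  shows "Min ((\<lambda>k. \<integral>\<^sup>+s. ennreal ((norm (Fbar Fs (snd (speg Fs \<tau> \<gamma> \<omega> x0 s k))))\<^sup>2)
                   \<partial>(PiM (UNIV :: (nat \<times> nat) set) (\<lambda>_. D))) ` {..K - 1})
         \<le> ennreal ((48 / (\<omega> * \<gamma> * (1 - L * (\<gamma> + 4 * \<omega>)))) * (norm (x0 - xstar))\<^sup>2 / (real K - 1))"
proof -
  have hmain: "mainloc Fs xstar D \<delta> L \<rho> \<gamma> \<omega> \<tau> K x0"
    unfolding mainloc_def mainloc_axioms_def spegloc_def
    by (intro conjI) (rule meas root D_prob D_sets D_mean ER sigma_fin delta_pos lip minty rho_pos rho_lt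
        gamma_lo gamma_hi omega_pos omega_hi x0_ne K_ge tau_ge)+
  interpret mainloc Fs xstar D \<delta> L \<rho> \<gamma> \<omega> \<tau> K x0 by (rule hmain)
  show ?thesis using final_bound unfolding Ea_def R2_def .
qed

end
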